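(* Let $n\ge 1$, $s\in\{1,\dots,n\}$, let $C\in\mathbb{R}^{n\times n}$ be symmetric positive definite, and let $0\le t\le\lambda_{\min}(C)$. For every $n\times n$ symmetric positive semidefinite matrix $X$, the concave envelope of $\Phi_s(\cdot\,;t)$ satisfies $$\widehat{\Phi}_s(X;t)=\psi_s\big(\lambda(X)+t\,\mathbb{I}_s\big).$$
   Context: $\lambda_{\min}(C)$ is the smallest eigenvalue of $C$. For a symmetric matrix $X$, $\lambda(X)=(\lambda_1(X),\dots,\lambda_n(X))$ is the vector of its eigenvalues in nonincreasing order. $\mathbb{I}_s\in\mathbb{R}^n$ is the vector whose first $s$ entries are $1$ and whose remaining entries are $0$. For a positive semidefinite $X$, $\Phi_s(X;t)=\sum_{i=1}^s\log(\lambda_i(X)+t)$ (natural log), and $\widehat{\Phi}_s(\cdot\,;t)$, the concave envelope, is the pointwise infimum of all concave functions $f$ on the cone of $n\times n$ positive semidefinite matrices with $f\ge\Phi_s(\cdot\,;t)$ there. For $y\in\mathbb{R}^n_+$ let $y^\downarrow_1\ge\dots\ge y^\downarrow_n$ be its entries sorted in nonincreasing order, with the convention $y^\downarrow_0=\infty$; there is a unique integer $k\in\{0,\dots,s-1\}$ with $y^\downarrow_k>\frac{1}{s-k}\sum_{i=k+1}^n y^\downarrow_i\ge y^\downarrow_{k+1}$, and $\psi_s(y)=\sum_{i=1}^k\log(y^\downarrow_i)+(s-k)\log\Big(\frac{1}{s-k}\sum_{i=k+1}^n y^\downarrow_i\Big)$. *)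

theory Defs
  imports "Jordan_Normal_Form.Char_Poly" "HOL-Computational_Algebra.Polynomial" "HOL-Library.Extended_Real"
begin

definition sym_mat :: "nat \<Rightarrow> real mat \<Rightarrow> bool" where
  "sym_mat n X \<longleftrightarrow> X \<in> carrier_mat n n \<and> transpose_mat X = X"

definition psd_mat :: "nat \<Rightarrow> real mat \<Rightarrow> bool" where
  "psd_mat n X \<longleftrightarrow> sym_mat n X \<and> (\<forall>v \<in> carrier_vec n. 0 \<le> v \<bullet> (X *\<^sub>v v))"

definition pd_mat :: "nat \<Rightarrow> real mat \<Rightarrow> bool" where
  "pd_mat n X \<longleftrightarrow> sym_mat n X \<and> (\<forall>v \<in> carrier_vec n. v \<noteq> 0\<^sub>v n \<longrightarrow> 0 < v \<bullet> (X *\<^sub>v v))"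

definition eigvals :: "real mat \<Rightarrow> real list" where
  "eigvals X = rev (sorted_list_of_multiset (proots (char_poly X)))"

definition lambda_min :: "real mat \<Rightarrow> real" where
  "lambda_min X = Min (set_mset (proots (char_poly X)))"

definition elog :: "real \<Rightarrow> ereal" where
  "elog x = (if 0 < x then ereal (ln x) else -\<infinity>)"

definition Phi :: "nat \<Rightarrow> real mat \<Rightarrow> real \<Rightarrow> ereal" where
  "Phi s X t = (\<Sum>i<s. elog (eigvals X ! i + t))"

text \<open>Concavity on the PSD cone (convexity of the hypograph, for extended-real-valued f).\<close>
definition concave_on_psd :: "nat \<Rightarrow> (real mat \<Rightarrow> ereal) \<Rightarrow> bool" where
  "concave_on_psd n f \<longleftrightarrow>
     (\<forall>X Y a r1 r2. psd_mat n X \<and> psd_mat n Y \<and> 0 \<le> a \<and> a \<le> 1 \<and>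
        ereal r1 \<le> f X \<and> ereal r2 \<le> f Y \<longrightarrow>
        ereal (a * r1 + (1 - a) * r2) \<le> f (a \<cdot>\<^sub>m X + (1 - a) \<cdot>\<^sub>m Y))"

definition Phi_hat :: "nat \<Rightarrow> nat \<Rightarrow> real mat \<Rightarrow> real \<Rightarrow> ereal" where
  "Phi_hat n s X t = Inf {f X | f. concave_on_psd n f \<and>
                          (\<forall>Y. psd_mat n Y \<longrightarrow> Phi s Y t \<le> f Y)}"

definition indic_vec :: "nat \<Rightarrow> nat \<Rightarrow> real list" where
  "indic_vec n s = map (\<lambda>i. if i < s then 1 else 0) [0..<n]"

text \<open>psi_s(y) for y in R^n_+ given as a list; yd i = y^down_i (1-indexed), yd 0 = infinity.\<close>
definition psi :: "nat \<Rightarrow> real list \<Rightarrow> ereal" where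
  "psi s y =
    (let ys = rev (sort y); n = length y;
         yd = (\<lambda>i::nat. if i = 0 then \<infinity> else ereal (ys ! (i - 1)));
         avg = (\<lambda>k::nat. (\<Sum>i = k..<n. ys ! i) / real (s - k));
         k = (THE k. k < s \<and> ereal (avg k) < yd k \<and> ys ! k \<le> avg k)
     in (\<Sum>i<k. elog (ys ! i)) + ereal (real (s - k)) * elog (avg k))"

end

theory Submission
  imports Defs "HOL-Combinatorics.Permutations"
begin


definition dmat :: "nat \<Rightarrow> (nat \<Rightarrow> real) \<Rightarrow> real mat" where
  "dmat n d = mat n n (\<lambda>(i,j). if i = j then d i else 0)"

definition orthm :: "nat \<Rightarrow> real mat \<Rightarrow> bool" where
  "orthm n U \<longleftrightarrow> U \<in> carrier_mat n n \<and> transpose_mat U * U = 1\<^sub>m n"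

lemma dmat_carrier[simp]: "dmat n d \<in> carrier_mat n n"
  by (simp add: dmat_def)

lemma mult_entry:
  fixes A B :: "'a::comm_ring_1 mat"
  assumes "A \<in> carrier_mat n m" "B \<in> carrier_mat m p" "i < n" "j < p"
  shows "(A * B) $$ (i,j) = (\<Sum>l<m. A $$ (i,l) * B $$ (l,j))"
  using assms by (simp add: scalar_prod_def atLeast0LessThan)

lemma mult_vec_entry:
  fixes A :: "'a::comm_ring_1 mat"
  assumes "A \<in> carrier_mat n m" "v \<in> carrier_vec m" "i < n"
  shows "(A *\<^sub>v v) $ i = (\<Sum>l<m. A $$ (i,l) * v $ l)"
  using assms by (simp add: scalar_prod_def atLeast0LessThan)

lemma udu_entry:
  assumes U: "U \<in> carrier_mat n n" and ij: "i < n" "j < n"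
  shows "(U * dmat n d * transpose_mat U) $$ (i,j) = (\<Sum>k<n. U $$ (i,k) * d k * U $$ (j,k))"
proof -
  have UD: "U * dmat n d \<in> carrier_mat n n" using U by simp
  have "(U * dmat n d * transpose_mat U) $$ (i,j) = (\<Sum>l<n. (U * dmat n d) $$ (i,l) * (transpose_mat U) $$ (l,j))"
    using mult_entry[OF UD _ ij] U by simp
  also have "\<dots> = (\<Sum>l<n. U $$ (i,l) * d l * U $$ (j,l))"
  proof (rule sum.cong[OF refl])
    fix l assume l: "l \<in> {..<n}"
    have "(U * dmat n d) $$ (i,l) = (\<Sum>k<n. U $$ (i,k) * dmat n d $$ (k,l))"
      using mult_entry[OF U dmat_carrier] ij l by simp
    also have "\<dots> = (\<Sum>k<n. if k = l then U $$ (i,k) * d l else 0)"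
      by (rule sum.cong[OF refl], insert l, auto simp: dmat_def)
    also have "\<dots> = U $$ (i,l) * d l" using l by simp
    finally show "(U * dmat n d) $$ (i,l) * (transpose_mat U) $$ (l,j) = U $$ (i,l) * d l * U $$ (j,l)"
      using U l ij by simp
  qed
  finally show ?thesis .
qed

lemma orthm_cols:
  assumes "orthm n U" "i < n" "j < n"
  shows "(\<Sum>k<n. U $$ (k,i) * U $$ (k,j)) = (if i = j then 1 else 0)"
proof -
  have U: "U \<in> carrier_mat n n" and TU: "transpose_mat U * U = 1\<^sub>m n" using assms unfolding orthm_def by auto
  have "(transpose_mat U * U) $$ (i,j) = (\<Sum>k<n. U $$ (k,i) * U $$ (k,j))"
    using mult_entry[of "transpose_mat U" n n U n i j] U assms by simp
  thus ?thesis using TU assms by simp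
qed

lemma orthm_rows:
  assumes "orthm n U" "i < n" "j < n"
  shows "(\<Sum>k<n. U $$ (i,k) * U $$ (j,k)) = (if i = j then 1 else 0)"
proof -
  have U: "U \<in> carrier_mat n n" and TU: "transpose_mat U * U = 1\<^sub>m n" using assms unfolding orthm_def by auto
  have UT: "U * transpose_mat U = 1\<^sub>m n"
    using mat_mult_left_right_inverse[of "transpose_mat U" n U] U TU by simp
  have "(U * transpose_mat U) $$ (i,j) = (\<Sum>k<n. U $$ (i,k) * U $$ (j,k))"
    using mult_entry[of U n n "transpose_mat U" n i j] U assms by simp
  thus ?thesis using UT assms by simp
qed

lemma orthmI:
  assumes U: "U \<in> carrier_mat n n"
  and c: "\<And>i j. i < n \<Longrightarrow> j < n \<Longrightarrow> (\<Sum>k<n. U $$ (k,i) * U $$ (k,j)) = (if i = j then 1 else 0)"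
  shows "orthm n U"
  unfolding orthm_def
proof (intro conjI U eq_matI)
  fix i j assume ij: "i < dim_row (1\<^sub>m n)" "j < dim_col (1\<^sub>m n)"
  hence "i < n" "j < n" by auto
  thus "(transpose_mat U * U) $$ (i,j) = 1\<^sub>m n $$ (i,j)"
    using mult_entry[of "transpose_mat U" n n U n i j] U c by simp
qed (use U in auto)

lemma orthm_UUT: "orthm n U \<Longrightarrow> U * transpose_mat U = 1\<^sub>m n"
  unfolding orthm_def using mat_mult_left_right_inverse[of "transpose_mat U" n U] by auto

lemma sym_real_eigen:
  assumes A: "sym_mat n A" and n: "0 < n"
  shows "\<exists>e. poly (char_poly A) e = 0"
proof -
  have Ac: "A \<in> carrier_mat n n" and At: "transpose_mat A = A" using A unfolding sym_mat_def by auto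
  have symA: "\<And>i j. i < n \<Longrightarrow> j < n \<Longrightarrow> A $$ (j,i) = A $$ (i,j)"
    by (metis At Ac carrier_matD index_transpose_mat(1))
  let ?p = "char_poly A"
  let ?pc = "map_poly complex_of_real ?p"
  have "degree ?p = n" using degree_monic_char_poly[OF Ac] by simp
  hence dpc: "degree ?pc = n" by simp
  have "\<not> constant (poly ?pc)" unfolding constant_degree dpc using n by simp
  then obtain z where z: "poly ?pc z = 0" using fundamental_theorem_of_algebra by blast
  let ?B = "map_mat complex_of_real A"
  have Bc: "?B \<in> carrier_mat n n" using Ac by simp
  have "char_poly ?B = ?pc" using of_real_hom.char_poly_hom[OF Ac] by simp
  hence "eigenvalue ?B z" using eigenvalue_root_char_poly[OF Bc] z by simp
  then obtain w where w: "eigenvector ?B w z" unfolding eigenvalue_def by blast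
  hence wc: "w \<in> carrier_vec n" and w0: "w \<noteq> 0\<^sub>v n" and Bw: "?B *\<^sub>v w = z \<cdot>\<^sub>v w"
    using Bc unfolding eigenvector_def by auto
  define S where "S = (\<Sum>i<n. cnj (w $ i) * (?B *\<^sub>v w) $ i)"
  define N where "N = (\<Sum>i<n. cnj (w $ i) * w $ i)"
  have S1: "S = z * N" unfolding S_def N_def Bw using wc
    by (simp add: sum_distrib_left mult.assoc mult.left_commute)
  have S2: "S = (\<Sum>i<n. \<Sum>j<n. complex_of_real (A $$ (i,j)) * (cnj (w $ i) * w $ j))"
    unfolding S_def using mult_vec_entry[OF Bc wc] Ac
    by (simp add: sum_distrib_left mult.assoc mult.left_commute)
  have "cnj S = (\<Sum>i<n. \<Sum>j<n. complex_of_real (A $$ (i,j)) * (w $ i * cnj (w $ j)))"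
    unfolding S2 by (simp add: mult.commute)
  also have "\<dots> = (\<Sum>j<n. \<Sum>i<n. complex_of_real (A $$ (i,j)) * (w $ i * cnj (w $ j)))"
    by (rule sum.swap)
  also have "\<dots> = S" unfolding S2
    by (rule sum.cong[OF refl], rule sum.cong[OF refl], auto simp: symA mult.commute)
  finally have "Im S = 0" by (metis cnj.simps(2) equal_neg_zero)
  have NR: "N = complex_of_real (\<Sum>i<n. (cmod (w $ i))^2)"
    unfolding N_def of_real_sum by (rule sum.cong[OF refl], simp add: complex_norm_square mult.commute del: of_real_power)
  have "\<exists>i<n. w $ i \<noteq> 0" using w0 wc by (metis eq_vecI carrier_vecD index_zero_vec(1) index_zero_vec(2))
  then obtain i0 where i0: "i0 < n" "w $ i0 \<noteq> 0" by blast
  have "0 < (cmod (w $ i0))^2" using i0 by simp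
  also have "\<dots> \<le> (\<Sum>i<n. (cmod (w $ i))^2)"
    by (rule member_le_sum, insert i0, auto)
  finally have Npos: "0 < (\<Sum>i<n. (cmod (w $ i))^2)" .
  have "Im z = 0" using \<open>Im S = 0\<close> S1 NR Npos by simp
  hence zr: "z = complex_of_real (Re z)" by (simp add: complex_eq_iff)
  have "complex_of_real (poly ?p (Re z)) = 0" using z zr of_real_hom.poly_map_poly by metis
  thus ?thesis by auto
qed

lemma sym_unit_eigvec:
  assumes A: "sym_mat n A" and n: "0 < n"
  shows "\<exists>e x. (\<Sum>k<n. (x k)^2) = 1 \<and> (\<forall>i<n. (\<Sum>j<n. A $$ (i,j) * x j) = e * x i)"
proof -
  have Ac: "A \<in> carrier_mat n n" using A unfolding sym_mat_def by auto
  obtain e where "poly (char_poly A) e = 0" using sym_real_eigen[OF A n] by blast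
  hence "eigenvalue A e" using eigenvalue_root_char_poly[OF Ac] by simp
  then obtain v where "eigenvector A v e" unfolding eigenvalue_def by blast
  hence vc: "v \<in> carrier_vec n" and v0: "v \<noteq> 0\<^sub>v n" and Av: "A *\<^sub>v v = e \<cdot>\<^sub>v v"
    using Ac unfolding eigenvector_def by auto
  define N where "N = (\<Sum>k<n. (v $ k)^2)"
  have "\<exists>i<n. v $ i \<noteq> 0" using v0 vc by (metis eq_vecI carrier_vecD index_zero_vec(1) index_zero_vec(2))
  then obtain i0 where i0: "i0 < n" "v $ i0 \<noteq> 0" by blast
  have "0 < (v $ i0)^2" using i0 by simp
  also have "\<dots> \<le> N" unfolding N_def by (rule member_le_sum, insert i0, auto)
  finally have Npos: "0 < N" .
  define x where "x k = v $ k / sqrt N" for k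
  have "(\<Sum>k<n. (x k)^2) = (\<Sum>k<n. (v $ k)^2) / N"
    unfolding x_def using Npos by (simp add: power_divide sum_divide_distrib)
  also have "\<dots> = 1" using Npos N_def by simp
  finally have 1: "(\<Sum>k<n. (x k)^2) = 1" .
  have 2: "(\<Sum>j<n. A $$ (i,j) * x j) = e * x i" if i: "i < n" for i
  proof -
    have "(\<Sum>j<n. A $$ (i,j) * x j) = (\<Sum>j<n. A $$ (i,j) * v $ j) / sqrt N"
      unfolding x_def by (simp add: sum_divide_distrib)
    also have "(\<Sum>j<n. A $$ (i,j) * v $ j) = (A *\<^sub>v v) $ i" using mult_vec_entry[OF Ac vc i] by simp
    also have "\<dots> = e * v $ i" using Av i vc by simp
    finally show ?thesis unfolding x_def by simp
  qed
  show ?thesis using 1 2 by blast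
qed



lemma householder:
  assumes n: "0 < n" and x: "(\<Sum>k<n. (x k)^2) = 1"
  shows "\<exists>H. orthm n H \<and> (\<forall>i<n. H $$ (i,0) = x i)"
proof (cases "x 0 = 1")
  case True
  have "(\<Sum>k<n. (x k)^2) = (x 0)^2 + (\<Sum>k\<in>{..<n}-{0}. (x k)^2)"
    using n by (simp add: sum.remove[of "{..<n}" 0])
  hence "(\<Sum>k\<in>{..<n}-{0}. (x k)^2) = 0" using True x by simp
  hence "\<forall>k\<in>{..<n}-{0}. (x k)^2 = 0"
    by (subst (asm) sum_nonneg_eq_0_iff, auto)
  hence xk: "\<And>k. k < n \<Longrightarrow> k \<noteq> 0 \<Longrightarrow> x k = 0" by auto
  show ?thesis
    by (rule exI[of _ "1\<^sub>m n"], auto simp: orthm_def True xk)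
next
  case False
  define c where "c = 1 - x 0"
  have c0: "c \<noteq> 0" using False c_def by simp
  define w where "w k = x k - (if k = 0 then 1 else 0)" for k
  have Sw: "(\<Sum>k<n. (w k)^2) = 2 * c"
  proof -
    have "(\<Sum>k<n. (w k)^2) = (\<Sum>k<n. (x k)^2 - 2 * (if k = 0 then x k else 0) + (if k = 0 then 1 else 0))"
      by (rule sum.cong[OF refl], auto simp: w_def power2_eq_square algebra_simps)
    also have "\<dots> = 1 - 2 * x 0 + 1" using n x
      by (simp add: sum.distrib sum_subtractf sum_distrib_left[symmetric])
    finally show ?thesis unfolding c_def by simp
  qed
  define ci where "ci = 1 / c"
  have cci: "c * ci = 1" using c0 ci_def by simp
  define H where "H = mat n n (\<lambda>(i,j). (if i = j then 1 else 0) - w i * w j * ci)"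
  have Hc: "H \<in> carrier_mat n n" unfolding H_def by simp
  have H0: "H $$ (i,0) = x i" if "i < n" for i
    using that n c0 unfolding H_def w_def c_def ci_def by (auto simp: field_simps)
  have "orthm n H"
  proof (rule orthmI[OF Hc])
    fix i j assume ij: "i < n" "j < n"
    have "(\<Sum>k<n. H $$ (k,i) * H $$ (k,j)) =
      (\<Sum>k<n. (if k = i then (if i = j then 1 else 0) else 0)
             - (if k = i then w k * w j * ci else 0) - (if k = j then w k * w i * ci else 0)
             + (w k)^2 * (w i * w j * ci^2))"
      by (rule sum.cong[OF refl], insert ij, auto simp: H_def power2_eq_square algebra_simps)
    also have "\<dots> = (if i = j then 1 else 0) - w i * w j * ci - w j * w i * ci + (\<Sum>k<n. (w k)^2) * (w i * w j * ci^2)"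
      using ij by (simp add: sum.distrib sum_subtractf sum_distrib_right)
    also have "\<dots> = (if i = j then 1 else 0) - 2 * (w i * w j * ci) + 2 * (w i * w j * ci) * (c * ci)" unfolding Sw
      by (simp add: algebra_simps power2_eq_square)
    also have "\<dots> = (if i = j then 1 else 0)" unfolding cci by simp
    finally show "(\<Sum>k<n. H $$ (k,i) * H $$ (k,j)) = (if i = j then 1 else 0)" .
  qed
  thus ?thesis using H0 by blast
qed

lemma mat_assoc3:
  fixes A B C :: "real mat"
  assumes "A \<in> carrier_mat n n" "B \<in> carrier_mat n n" "C \<in> carrier_mat n n"
  shows "A * B * C = A * (B * C)"
  using assoc_mult_mat[OF assms] .

lemma UtAU_entry:
  fixes U A :: "real mat"
  assumes U: "U \<in> carrier_mat n n" and A: "A \<in> carrier_mat n n" and ij: "i < n" "j < n"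
  shows "(transpose_mat U * A * U) $$ (i,j) = (\<Sum>a<n. U $$ (a,i) * (\<Sum>b<n. A $$ (a,b) * U $$ (b,j)))"
proof -
  have "(transpose_mat U * A * U) = transpose_mat U * (A * U)"
    by (rule mat_assoc3, insert U A, auto)
  also have "\<dots> $$ (i,j) = (\<Sum>a<n. (transpose_mat U) $$ (i,a) * (A * U) $$ (a,j))"
    by (rule mult_entry, insert U A ij, auto)
  also have "\<dots> = (\<Sum>a<n. U $$ (a,i) * (\<Sum>b<n. A $$ (a,b) * U $$ (b,j)))"
  proof (rule sum.cong[OF refl])
    fix a assume a: "a \<in> {..<n}"
    show "(transpose_mat U) $$ (i,a) * (A * U) $$ (a,j) = U $$ (a,i) * (\<Sum>b<n. A $$ (a,b) * U $$ (b,j))"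
      using mult_entry[OF A U, of a j] a ij U by simp
  qed
  finally show ?thesis .
qed

lemma spectral_exists:
  assumes "sym_mat n A"
  shows "\<exists>U d. orthm n U \<and> A = U * dmat n d * transpose_mat U"
  using assms
proof (induction n arbitrary: A)
  case 0
  hence A: "A \<in> carrier_mat 0 0" unfolding sym_mat_def by auto
  show ?case
    by (rule exI[of _ "1\<^sub>m 0"], rule exI[of _ "\<lambda>_. 0"], insert A, auto simp: orthm_def intro!: eq_matI)
next
  case (Suc m A)
  define n where "n = Suc m"
  have symA: "sym_mat n A" using Suc.prems n_def by simp
  have Ac: "A \<in> carrier_mat n n" and At: "transpose_mat A = A" using symA unfolding sym_mat_def by auto
  have Asym: "\<And>i j. i < n \<Longrightarrow> j < n \<Longrightarrow> A $$ (j,i) = A $$ (i,j)"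
    by (metis At Ac carrier_matD index_transpose_mat(1))
  obtain e x where x1: "(\<Sum>k<n. (x k)^2) = 1" and ev: "\<And>i. i < n \<Longrightarrow> (\<Sum>j<n. A $$ (i,j) * x j) = e * x i"
    using sym_unit_eigvec[OF symA] n_def by auto
  obtain H where H: "orthm n H" and H0: "\<And>i. i < n \<Longrightarrow> H $$ (i,0) = x i"
    using householder[OF _ x1] n_def by auto
  have Hc: "H \<in> carrier_mat n n" using H orthm_def by auto
  define A' where "A' = transpose_mat H * A * H"
  have A'c: "A' \<in> carrier_mat n n" unfolding A'_def using Hc Ac by auto
  have A'e: "A' $$ (i,j) = (\<Sum>a<n. \<Sum>b<n. H $$ (a,i) * A $$ (a,b) * H $$ (b,j))" if "i < n" "j < n" for i j
    unfolding A'_def UtAU_entry[OF Hc Ac that] by (simp add: sum_distrib_left mult.assoc)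
  have A'sym: "A' $$ (j,i) = A' $$ (i,j)" if "i < n" "j < n" for i j
  proof -
    have "A' $$ (j,i) = (\<Sum>a<n. \<Sum>b<n. H $$ (a,j) * A $$ (a,b) * H $$ (b,i))" using A'e that by simp
    also have "\<dots> = (\<Sum>b<n. \<Sum>a<n. H $$ (a,j) * A $$ (a,b) * H $$ (b,i))" by (rule sum.swap)
    also have "\<dots> = A' $$ (i,j)" unfolding A'e[OF that]
      by (rule sum.cong[OF refl], rule sum.cong[OF refl], auto simp: Asym mult.commute mult.left_commute)
    finally show ?thesis .
  qed
  have A'col0: "A' $$ (i,0) = (if i = 0 then e else 0)" if "i < n" for i
  proof -
    have "A' $$ (i,0) = (\<Sum>a<n. H $$ (a,i) * (\<Sum>b<n. A $$ (a,b) * H $$ (b,0)))"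
      unfolding A'_def using UtAU_entry[OF Hc Ac that] n_def by simp
    also have "\<dots> = (\<Sum>a<n. e * (H $$ (a,i) * H $$ (a,0)))"
      by (rule sum.cong[OF refl], auto simp: H0 ev)
    also have "\<dots> = e * (if i = 0 then 1 else 0)"
      unfolding sum_distrib_left[symmetric] using orthm_cols[OF H that, of 0] n_def by simp
    finally show ?thesis by simp
  qed
  define A3 where "A3 = mat m m (\<lambda>(i,j). A' $$ (Suc i, Suc j))"
  have "sym_mat m A3" unfolding sym_mat_def A3_def
    by (auto intro!: eq_matI simp: A'sym n_def)
  then obtain U3 d3 where U3: "orthm m U3" and A3e: "A3 = U3 * dmat m d3 * transpose_mat U3"
    using Suc.IH by blast
  have U3c: "U3 \<in> carrier_mat m m" using U3 orthm_def by auto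
  define E where "E = mat n n (\<lambda>(i,j). if i = 0 \<and> j = 0 then 1 else if i = 0 \<or> j = 0 then 0 else U3 $$ (i-1,j-1))"
  have Ec: "E \<in> carrier_mat n n" unfolding E_def by simp
  define d where "d i = (if i = 0 then e else d3 (i-1))" for i
  have E: "orthm n E"
  proof (rule orthmI[OF Ec])
    fix i j assume ij: "i < n" "j < n"
    have "(\<Sum>k<n. E $$ (k,i) * E $$ (k,j)) = E $$ (0,i) * E $$ (0,j) + (\<Sum>k<m. E $$ (Suc k,i) * E $$ (Suc k,j))"
      unfolding n_def by (rule sum.lessThan_Suc_shift)
    also have "\<dots> = (if i = j then 1 else 0)"
    proof (cases i)
      case 0 thus ?thesis using ij by (auto simp: E_def n_def)
    next
      case (Suc i')
      show ?thesis
      proof (cases j)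
        case 0 thus ?thesis using ij Suc by (auto simp: E_def n_def)
      next
        case (Suc j')
        have "(\<Sum>k<m. E $$ (Suc k,i) * E $$ (Suc k,j)) = (\<Sum>k<m. U3 $$ (k,i') * U3 $$ (k,j'))"
          by (rule sum.cong[OF refl], insert ij \<open>i = Suc i'\<close> Suc, auto simp: E_def n_def)
        also have "\<dots> = (if i' = j' then 1 else 0)" using orthm_cols[OF U3] ij \<open>i = Suc i'\<close> Suc n_def by simp
        finally show ?thesis using \<open>i = Suc i'\<close> Suc ij by (auto simp: E_def n_def)
      qed
    qed
    finally show "(\<Sum>k<n. E $$ (k,i) * E $$ (k,j)) = (if i = j then 1 else 0)" .
  qed
  have A'E: "A' = E * dmat n d * transpose_mat E"
  proof (rule eq_matI)
    show "dim_row A' = dim_row (E * dmat n d * transpose_mat E)" using A'c Ec by simp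
    show "dim_col A' = dim_col (E * dmat n d * transpose_mat E)" using A'c Ec by simp
    fix i j assume "i < dim_row (E * dmat n d * transpose_mat E)" "j < dim_col (E * dmat n d * transpose_mat E)"
    hence ij: "i < n" "j < n" using Ec by auto
    have "(E * dmat n d * transpose_mat E) $$ (i,j) = (\<Sum>k<n. E $$ (i,k) * d k * E $$ (j,k))"
      by (rule udu_entry[OF Ec ij])
    also have "\<dots> = E $$ (i,0) * d 0 * E $$ (j,0) + (\<Sum>k<m. E $$ (i,Suc k) * d (Suc k) * E $$ (j,Suc k))"
      unfolding n_def by (rule sum.lessThan_Suc_shift)
    also have "\<dots> = A' $$ (i,j)"
    proof (cases i)
      case 0 thus ?thesis using ij A'col0 A'sym[of 0 j] by (auto simp: E_def n_def d_def)
    next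
      case (Suc i')
      show ?thesis
      proof (cases j)
        case 0 thus ?thesis using ij \<open>i = Suc i'\<close> A'col0 by (auto simp: E_def n_def d_def)
      next
        case (Suc j')
        have "(\<Sum>k<m. E $$ (i,Suc k) * d (Suc k) * E $$ (j,Suc k)) = (\<Sum>k<m. U3 $$ (i',k) * d3 k * U3 $$ (j',k))"
          by (rule sum.cong[OF refl], insert ij \<open>i = Suc i'\<close> Suc, auto simp: E_def n_def d_def)
        also have "\<dots> = A3 $$ (i',j')" unfolding A3e using udu_entry[OF U3c] ij \<open>i = Suc i'\<close> Suc n_def by simp
        also have "\<dots> = A' $$ (i,j)" unfolding A3_def using ij \<open>i = Suc i'\<close> Suc n_def by simp
        finally show ?thesis using \<open>i = Suc i'\<close> Suc ij by (auto simp: E_def n_def)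
      qed
    qed
    finally show "A' $$ (i,j) = (E * dmat n d * transpose_mat E) $$ (i,j)" by simp
  qed
  have HHt: "H * transpose_mat H = 1\<^sub>m n" using orthm_UUT[OF H] .
  have HtH: "transpose_mat H * H = 1\<^sub>m n" using H orthm_def by auto
  have EtE: "transpose_mat E * E = 1\<^sub>m n" using E orthm_def by auto
  have HtC: "transpose_mat H \<in> carrier_mat n n" "transpose_mat E \<in> carrier_mat n n" using Hc Ec by auto
  have AA': "A = H * A' * transpose_mat H"
  proof -
    have "H * A' * transpose_mat H = (H * transpose_mat H) * A * (H * transpose_mat H)"
      unfolding A'_def using Hc Ac HtC
      by (simp add: assoc_mult_mat[of _ n n _ n _ n])
    thus ?thesis using HHt Ac by simp
  qed
  define U where "U = H * E"
  have Uc: "U \<in> carrier_mat n n" unfolding U_def using Hc Ec by simp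
  have tU: "transpose_mat U = transpose_mat E * transpose_mat H"
    unfolding U_def using transpose_mult[OF Hc Ec] .
  have "transpose_mat U * U = transpose_mat E * (transpose_mat H * H) * E"
  proof -
    have "transpose_mat U * U = transpose_mat E * transpose_mat H * (H * E)" unfolding tU by (simp only: U_def)
    also have "\<dots> = transpose_mat E * (transpose_mat H * (H * E))" by (rule mat_assoc3, insert Hc Ec HtC, auto)
    also have "transpose_mat H * (H * E) = (transpose_mat H * H) * E" by (rule mat_assoc3[symmetric], insert Hc Ec HtC, auto)
    also have "transpose_mat E * ((transpose_mat H * H) * E) = transpose_mat E * (transpose_mat H * H) * E"
      by (rule mat_assoc3[symmetric], insert Hc Ec HtC, auto)
    finally show ?thesis .
  qed
  also have "\<dots> = 1\<^sub>m n" using HtH EtE Ec by simp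
  finally have "orthm n U" unfolding orthm_def using Uc by simp
  moreover have "A = U * dmat n d * transpose_mat U"
  proof -
    have M1: "dmat n d * transpose_mat E \<in> carrier_mat n n" by (rule mult_carrier_mat[OF dmat_carrier], insert Ec, auto)
    have M2: "E * (dmat n d * transpose_mat E) \<in> carrier_mat n n" by (rule mult_carrier_mat[OF Ec M1])
    have "A = H * (E * (dmat n d * transpose_mat E)) * transpose_mat H"
      unfolding AA' A'E using Ec by (simp add: assoc_mult_mat[of _ n n _ n _ n])
    also have "\<dots> = H * ((E * (dmat n d * transpose_mat E)) * transpose_mat H)"
      by (rule mat_assoc3, insert Hc M2 HtC, auto)
    also have "(E * (dmat n d * transpose_mat E)) * transpose_mat H = E * ((dmat n d * transpose_mat E) * transpose_mat H)"
      by (rule mat_assoc3, insert Ec M1 HtC, auto)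
    also have "(dmat n d * transpose_mat E) * transpose_mat H = dmat n d * (transpose_mat E * transpose_mat H)"
      by (rule mat_assoc3, insert HtC, auto)
    finally show ?thesis
      unfolding U_def transpose_mult[OF Hc Ec] using Hc Ec HtC by (simp add: assoc_mult_mat[of _ n n _ n _ n])
  qed
  ultimately show ?case unfolding n_def by blast
qed



lemma udu_carrier: "U \<in> carrier_mat n n \<Longrightarrow> U * dmat n d * transpose_mat U \<in> carrier_mat n n"
  by (metis dmat_carrier mult_carrier_mat transpose_carrier_mat)

lemma charpoly_udu:
  assumes U: "orthm n U"
  shows "char_poly (U * dmat n d * transpose_mat U) = (\<Prod>a \<leftarrow> map d [0..<n]. [:- a, 1:])"
proof -
  have Uc: "U \<in> carrier_mat n n" using U orthm_def by auto
  have "similar_mat (U * dmat n d * transpose_mat U) (dmat n d)"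
    by (rule similar_matI[of _ _ U "transpose_mat U" n], insert U Uc orthm_UUT[OF U],
        auto simp: orthm_def udu_carrier)
  hence "char_poly (U * dmat n d * transpose_mat U) = char_poly (dmat n d)" by (rule char_poly_similar)
  also have "\<dots> = (\<Prod>a \<leftarrow> diag_mat (dmat n d). [:- a, 1:])"
    by (rule char_poly_upper_triangular[of _ n], auto simp: upper_triangular_def dmat_def)
  also have "diag_mat (dmat n d) = map d [0..<n]"
    by (auto simp: diag_mat_def dmat_def intro!: nth_equalityI)
  finally show ?thesis .
qed

lemma proots_lin: "proots (\<Prod>a \<leftarrow> ds. [:- a, 1:]) = mset (ds :: real list)"
proof (induction ds)
  case Nil thus ?case by simp
next
  case (Cons a ds)
  have nz: "(\<Prod>a \<leftarrow> ds. [:- a, 1:]) \<noteq> (0 :: real poly)"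
    unfolding Groups_List.prod_list_zero_iff by auto
  have "proots (\<Prod>a \<leftarrow> a # ds. [:- a, 1:]) = proots [:- a, 1:] + proots (\<Prod>a \<leftarrow> ds. [:- a, 1:])"
    by (simp only: list.map prod_list.Cons, rule proots_mult, simp, rule nz)
  also have "proots [:- a, 1:] = {#a#}" using proots_linear_factor[of "-a"] by simp
  finally show ?case using Cons by simp
qed

lemma eigvals_udu:
  assumes U: "orthm n U"
  shows "eigvals (U * dmat n d * transpose_mat U) = rev (sort (map d [0..<n]))"
  unfolding eigvals_def charpoly_udu[OF U] proots_lin sorted_list_of_multiset_mset ..

lemma sym_udu:
  assumes U: "U \<in> carrier_mat n n"
  shows "sym_mat n (U * dmat n d * transpose_mat U)"
  unfolding sym_mat_def
proof (intro conjI udu_carrier[OF U] eq_matI)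
  fix i j assume "i < dim_row (U * dmat n d * transpose_mat U)" "j < dim_col (U * dmat n d * transpose_mat U)"
  hence ij: "i < n" "j < n" using udu_carrier[OF U] carrier_matD[OF U] by auto
  show "transpose_mat (U * dmat n d * transpose_mat U) $$ (i,j) = (U * dmat n d * transpose_mat U) $$ (i,j)"
  proof -
    have "transpose_mat (U * dmat n d * transpose_mat U) $$ (i,j) = (U * dmat n d * transpose_mat U) $$ (j,i)"
      using ij carrier_matD[OF udu_carrier[OF U]] by simp
    also have "\<dots> = (U * dmat n d * transpose_mat U) $$ (i,j)"
      unfolding udu_entry[OF U ij] udu_entry[OF U ij(2,1)] by (simp add: mult.commute mult.left_commute)
    finally show ?thesis .
  qed
qed (use U udu_carrier[OF U] in auto)

lemma quad_udu:
  assumes U: "U \<in> carrier_mat n n" and v: "v \<in> carrier_vec n"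
  shows "v \<bullet> ((U * dmat n d * transpose_mat U) *\<^sub>v v) = (\<Sum>k<n. d k * (\<Sum>a<n. U $$ (a,k) * v $ a)^2)"
proof -
  let ?A = "U * dmat n d * transpose_mat U"
  have Ac: "?A \<in> carrier_mat n n" by (rule udu_carrier[OF U])
  have "v \<bullet> (?A *\<^sub>v v) = (\<Sum>i<n. v $ i * (?A *\<^sub>v v) $ i)"
    using v Ac U by (simp add: scalar_prod_def atLeast0LessThan)
  also have "\<dots> = (\<Sum>i<n. v $ i * (\<Sum>j<n. (\<Sum>k<n. U $$ (i,k) * d k * U $$ (j,k)) * v $ j))"
    by (rule sum.cong[OF refl], simp add: mult_vec_entry[OF Ac v] udu_entry[OF U])
  also have "\<dots> = (\<Sum>i<n. \<Sum>j<n. \<Sum>k<n. d k * ((U $$ (i,k) * v $ i) * (U $$ (j,k) * v $ j)))"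
    by (simp add: sum_distrib_left sum_distrib_right mult.commute mult.left_commute)
  also have "\<dots> = (\<Sum>i<n. \<Sum>k<n. \<Sum>j<n. d k * ((U $$ (i,k) * v $ i) * (U $$ (j,k) * v $ j)))"
    by (rule sum.cong[OF refl], rule sum.swap)
  also have "\<dots> = (\<Sum>k<n. \<Sum>i<n. \<Sum>j<n. d k * ((U $$ (i,k) * v $ i) * (U $$ (j,k) * v $ j)))"
    by (rule sum.swap)
  also have "\<dots> = (\<Sum>k<n. d k * (\<Sum>a<n. U $$ (a,k) * v $ a)^2)"
    by (simp add: power2_eq_square sum_distrib_left sum_distrib_right mult.commute mult.left_commute)
  finally show ?thesis .
qed

lemma psd_udu:
  assumes U: "U \<in> carrier_mat n n" and d: "\<And>k. k < n \<Longrightarrow> 0 \<le> d k"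
  shows "psd_mat n (U * dmat n d * transpose_mat U)"
  unfolding psd_mat_def
  using sym_udu[OF U] quad_udu[OF U] d by (auto intro!: sum_nonneg)

lemma quad_udu_col:
  assumes U: "orthm n U" and i: "i < n"
  shows "col U i \<bullet> ((U * dmat n d * transpose_mat U) *\<^sub>v col U i) = d i"
proof -
  have Uc: "U \<in> carrier_mat n n" using U orthm_def by auto
  have "col U i \<bullet> ((U * dmat n d * transpose_mat U) *\<^sub>v col U i) = (\<Sum>k<n. d k * (\<Sum>a<n. U $$ (a,k) * col U i $ a)^2)"
    by (rule quad_udu[OF Uc], insert Uc i, auto)
  also have "\<dots> = (\<Sum>k<n. if k = i then d k else 0)"
    by (rule sum.cong[OF refl], insert Uc i, auto simp: orthm_cols[OF U])
  also have "\<dots> = d i" using i by simp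
  finally show ?thesis .
qed

lemma spectral_sorted:
  assumes A: "sym_mat n A"
  shows "\<exists>U \<mu>. orthm n U \<and> A = U * dmat n \<mu> * transpose_mat U \<and>
     (\<forall>i j. i \<le> j \<longrightarrow> j < n \<longrightarrow> \<mu> j \<le> \<mu> i) \<and> eigvals A = map \<mu> [0..<n]"
proof -
  obtain U d where U: "orthm n U" and AU: "A = U * dmat n d * transpose_mat U"
    using spectral_exists[OF A] by blast
  have Uc: "U \<in> carrier_mat n n" using U orthm_def by auto
  define ds where "ds = map d [0..<n]"
  define ys where "ys = rev (sort ds)"
  have ev: "eigvals A = ys" unfolding AU eigvals_udu[OF U] ys_def ds_def ..
  have lys: "length ys = n" unfolding ys_def ds_def by simp
  have "mset ys = mset ds" unfolding ys_def by simp
  then obtain p where p: "p permutes {..<length ds}" and pl: "permute_list p ds = ys"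
    by (rule mset_eq_permutation)
  have p': "p permutes {..<n}" using p ds_def by simp
  have pn: "\<And>i. i < n \<Longrightarrow> p i < n" by (metis lessThan_iff permutes_in_image[OF p'])
  have ysn: "\<And>i. i < n \<Longrightarrow> ys ! i = d (p i)"
    using pl permute_list_nth[OF p] pn unfolding ds_def by (metis length_map length_upt diff_zero nth_map_upt add_0)
  define \<mu> where "\<mu> i = ys ! i" for i
  define V where "V = mat n n (\<lambda>(i,j). U $$ (i, p j))"
  have Vc: "V \<in> carrier_mat n n" unfolding V_def by simp
  have pinj: "\<And>i j. p i = p j \<Longrightarrow> i = j" using p' by (meson permutes_inj injD)
  have V: "orthm n V"
    by (rule orthmI[OF Vc], auto simp: V_def orthm_cols[OF U] pn pinj)
  have AV: "A = V * dmat n \<mu> * transpose_mat V"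
  proof (rule eq_matI)
    fix i j assume "i < dim_row (V * dmat n \<mu> * transpose_mat V)" "j < dim_col (V * dmat n \<mu> * transpose_mat V)"
    hence ij: "i < n" "j < n" using udu_carrier[OF Vc] carrier_matD[OF Vc] by auto
    have "(V * dmat n \<mu> * transpose_mat V) $$ (i,j) = (\<Sum>k<n. U $$ (i, p k) * d (p k) * U $$ (j, p k))"
      unfolding udu_entry[OF Vc ij] by (rule sum.cong[OF refl], auto simp: V_def \<mu>_def ysn ij)
    also have "\<dots> = (\<Sum>k<n. U $$ (i, k) * d k * U $$ (j, k))"
      using sum.permute[OF p', of "\<lambda>k. U $$ (i, k) * d k * U $$ (j, k)"] by (simp add: comp_def)
    also have "\<dots> = A $$ (i,j)" unfolding AU udu_entry[OF Uc ij] ..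
    finally show "A $$ (i,j) = (V * dmat n \<mu> * transpose_mat V) $$ (i,j)" by simp
  qed (use AU udu_carrier[OF Uc] udu_carrier[OF Vc] carrier_matD[OF Uc] carrier_matD[OF Vc] in auto)
  have mono: "\<mu> j \<le> \<mu> i" if "i \<le> j" "j < n" for i j
  proof -
    have s: "sorted (sort ds)" by simp
    have ls: "length (sort ds) = n" unfolding ds_def by simp
    have "sort ds ! (n - Suc j) \<le> sort ds ! (n - Suc i)"
      by (rule sorted_nth_mono[OF s], insert that ls, auto)
    thus ?thesis unfolding \<mu>_def ys_def using that ls by (simp add: rev_nth)
  qed
  have "eigvals A = map \<mu> [0..<n]" unfolding ev \<mu>_def using lys by (auto intro!: nth_equalityI)
  thus ?thesis using V AV mono by blast
qed

lemma psd_eig_nonneg: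
  assumes A: "psd_mat n A" and U: "orthm n U" and AU: "A = U * dmat n \<mu> * transpose_mat U" and i: "i < n"
  shows "0 \<le> \<mu> i"
proof -
  have Uc: "U \<in> carrier_mat n n" using U orthm_def by auto
  have "0 \<le> col U i \<bullet> (A *\<^sub>v col U i)" using A Uc unfolding psd_mat_def by auto
  thus ?thesis unfolding AU quad_udu_col[OF U i] .
qed



lemma smallest_sum:
  fixes c q :: "nat \<Rightarrow> real"
  assumes mono: "\<And>i j. i \<le> j \<Longrightarrow> j < n \<Longrightarrow> c i \<le> c j"
    and q01: "\<And>i. i < n \<Longrightarrow> 0 \<le> q i \<and> q i \<le> 1"
    and qs: "(\<Sum>i<n. q i) = real m" and mn: "m \<le> n"
  shows "(\<Sum>i<m. c i) \<le> (\<Sum>i<n. c i * q i)"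
proof (cases "n = 0")
  case True thus ?thesis using mn by simp
next
  case False
  define g where "g = c (min m (n - 1))"
  have le: "c i \<le> g" if "i < m" for i unfolding g_def by (rule mono, insert that False mn, auto)
  have ge: "g \<le> c i" if "m \<le> i" "i < n" for i unfolding g_def by (rule mono, insert that False mn, auto)
  have "(\<Sum>i<n. g * (q i - (if i < m then 1 else 0))) \<le> (\<Sum>i<n. c i * q i - (if i < m then c i else 0))"
  proof (rule sum_mono)
    fix i assume i: "i \<in> {..<n}"
    show "g * (q i - (if i < m then 1 else 0)) \<le> c i * q i - (if i < m then c i else 0)"
    proof (cases "i < m")
      case True
      have "0 \<le> (g - c i) * (1 - q i)" using le[OF True] q01[of i] i by (intro mult_nonneg_nonneg, auto)
      thus ?thesis using True by (simp add: algebra_simps)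
    next
      case False
      have "0 \<le> (c i - g) * q i" using ge[of i] False q01[of i] i by (intro mult_nonneg_nonneg, auto)
      thus ?thesis using False by (simp add: algebra_simps)
    qed
  qed
  moreover have "(\<Sum>i<n. g * (q i - (if i < m then 1 else 0))) = g * (real m - real m)"
  proof -
    have e: "{..<n} \<inter> {i. i < m} = {..<m}" using mn by auto
    have "(\<Sum>i<n. (if i < m then 1 else 0 :: real)) = (\<Sum>i\<in>{..<m}. 1)"
      by (simp add: sum.If_cases e)
    thus ?thesis by (simp add: sum_distrib_left[symmetric] sum_subtractf qs)
  qed
  moreover have "(\<Sum>i<n. c i * q i - (if i < m then c i else 0)) = (\<Sum>i<n. c i * q i) - (\<Sum>i<m. c i)"
  proof -
    have e: "{..<n} \<inter> {i. i < m} = {..<m}" using mn by auto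
    show ?thesis by (simp add: sum_subtractf sum.If_cases e)
  qed
  ultimately show ?thesis by simp
qed

lemma sum_if_le:
  fixes f :: "nat \<Rightarrow> real"
  assumes "m < n"
  shows "(\<Sum>j<n. if j \<le> m then f j else 0) = (\<Sum>j<Suc m. f j)"
proof -
  have e: "{..<n} \<inter> {j. j \<le> m} = {..<Suc m}" using assms by auto
  have "(\<Sum>j<n. if j \<le> m then f j else 0) = (\<Sum>j\<in>{..<n} \<inter> {j. j \<le> m}. f j)"
    by (simp add: sum.If_cases)
  thus ?thesis unfolding e .
qed

lemma telescope_lam:
  fixes lam :: "nat \<Rightarrow> real" and n j :: nat
  defines "\<delta> \<equiv> \<lambda>m. lam m - (if Suc m < n then lam (Suc m) else 0)"
  assumes j: "j < n"
  shows "(\<Sum>m<n. if j \<le> m then \<delta> m else 0) = lam j"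
proof -
  define f where "f m = (if m < n then lam m else 0)" for m
  have "(\<Sum>m<n. if j \<le> m then \<delta> m else 0) = (\<Sum>m\<in>{j..<n}. \<delta> m)"
    by (simp add: sum.If_cases) (rule sum.cong, auto)
  also have "\<dots> = (\<Sum>m\<in>{j..<n}. - (f (Suc m) - f m))"
    by (rule sum.cong, auto simp: \<delta>_def f_def)
  also have "\<dots> = - (f n - f j)" unfolding sum_negf using sum_Suc_diff'[of j n f] j by simp
  finally show ?thesis using j by (simp add: f_def)
qed

lemma trace_ineq:
  fixes c lam :: "nat \<Rightarrow> real" and P :: "nat \<Rightarrow> nat \<Rightarrow> real"
  assumes cmono: "\<And>i j. i \<le> j \<Longrightarrow> j < n \<Longrightarrow> c i \<le> c j"
    and lmono: "\<And>i j. i \<le> j \<Longrightarrow> j < n \<Longrightarrow> lam j \<le> lam i"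
    and lnn: "\<And>i. i < n \<Longrightarrow> 0 \<le> lam i"
    and Pnn: "\<And>i j. i < n \<Longrightarrow> j < n \<Longrightarrow> 0 \<le> P i j"
    and Prow: "\<And>i. i < n \<Longrightarrow> (\<Sum>j<n. P i j) = 1"
    and Pcol: "\<And>j. j < n \<Longrightarrow> (\<Sum>i<n. P i j) = 1"
  shows "(\<Sum>k<n. c k * lam k) \<le> (\<Sum>i<n. c i * (\<Sum>j<n. P i j * lam j))"
proof -
  define \<delta> where "\<delta> m = lam m - (if Suc m < n then lam (Suc m) else 0)" for m
  have dnn: "0 \<le> \<delta> m" if "m < n" for m using that lmono[of m "Suc m"] lnn[of m] by (auto simp: \<delta>_def)
  have lam_eq: "lam j = (\<Sum>m<n. if j \<le> m then \<delta> m else 0)" if "j < n" for j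
    using telescope_lam[OF that, of lam] unfolding \<delta>_def by simp
  have L: "(\<Sum>k<n. c k * lam k) = (\<Sum>m<n. \<delta> m * (\<Sum>k<Suc m. c k))"
  proof -
    have "(\<Sum>k<n. c k * lam k) = (\<Sum>k<n. \<Sum>m<n. if k \<le> m then \<delta> m * c k else 0)"
      by (rule sum.cong[OF refl], subst lam_eq, auto simp: sum_distrib_left intro!: sum.cong)
    also have "\<dots> = (\<Sum>m<n. \<Sum>k<n. if k \<le> m then \<delta> m * c k else 0)" by (rule sum.swap)
    also have "\<dots> = (\<Sum>m<n. \<delta> m * (\<Sum>k<Suc m. c k))"
    proof (rule sum.cong[OF refl])
      fix m assume m: "m \<in> {..<n}"
      have "(\<Sum>k<n. if k \<le> m then \<delta> m * c k else 0) = (\<Sum>k\<in>{..<n} \<inter> {k. k \<le> m}. \<delta> m * c k)"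
        by (simp add: sum.If_cases)
      also have "{..<n} \<inter> {k. k \<le> m} = {..<Suc m}" using m by auto
      finally show "(\<Sum>k<n. if k \<le> m then \<delta> m * c k else 0) = \<delta> m * (\<Sum>k<Suc m. c k)"
        by (simp add: sum_distrib_left algebra_simps)
    qed
    finally show ?thesis .
  qed
  have R: "(\<Sum>i<n. c i * (\<Sum>j<n. P i j * lam j)) = (\<Sum>m<n. \<delta> m * (\<Sum>i<n. c i * (\<Sum>j<Suc m. P i j)))"
  proof -
    have "(\<Sum>i<n. c i * (\<Sum>j<n. P i j * lam j)) = (\<Sum>i<n. \<Sum>j<n. \<Sum>m<n. if j \<le> m then \<delta> m * (c i * P i j) else 0)"
      by (rule sum.cong[OF refl], simp add: sum_distrib_left, rule sum.cong[OF refl], subst lam_eq,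
          auto simp: sum_distrib_left intro!: sum.cong simp: mult.commute mult.left_commute)
    also have "\<dots> = (\<Sum>i<n. \<Sum>m<n. \<Sum>j<n. if j \<le> m then \<delta> m * (c i * P i j) else 0)"
      by (rule sum.cong[OF refl], rule sum.swap)
    also have "\<dots> = (\<Sum>m<n. \<Sum>i<n. \<Sum>j<n. if j \<le> m then \<delta> m * (c i * P i j) else 0)"
      by (rule sum.swap)
    also have "\<dots> = (\<Sum>m<n. \<delta> m * (\<Sum>i<n. c i * (\<Sum>j<Suc m. P i j)))"
    proof (rule sum.cong[OF refl])
      fix m assume m: "m \<in> {..<n}"
      have e: "{..<n} \<inter> {j. j \<le> m} = {..<Suc m}" using m by auto
      have "(\<Sum>i<n. \<Sum>j<n. if j \<le> m then \<delta> m * (c i * P i j) else 0) = (\<Sum>i<n. \<Sum>j<Suc m. \<delta> m * (c i * P i j))"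
        by (rule sum.cong[OF refl], rule sum_if_le, insert m, simp)
      also have "(\<Sum>i<n. \<Sum>j<Suc m. \<delta> m * (c i * P i j)) = \<delta> m * (\<Sum>i<n. c i * (\<Sum>j<Suc m. P i j))"
        by (simp only: sum_distrib_left)
      finally show "(\<Sum>i<n. \<Sum>j<n. if j \<le> m then \<delta> m * (c i * P i j) else 0) = \<delta> m * (\<Sum>i<n. c i * (\<Sum>j<Suc m. P i j))" .
    qed
    finally show ?thesis .
  qed
  have "(\<Sum>m<n. \<delta> m * (\<Sum>k<Suc m. c k)) \<le> (\<Sum>m<n. \<delta> m * (\<Sum>i<n. c i * (\<Sum>j<Suc m. P i j)))"
  proof (rule sum_mono, rule mult_left_mono)
    fix m assume m: "m \<in> {..<n}"
    show "0 \<le> \<delta> m" using dnn m by auto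
    show "(\<Sum>k<Suc m. c k) \<le> (\<Sum>i<n. c i * (\<Sum>j<Suc m. P i j))"
    proof (rule smallest_sum[OF cmono])
      fix i assume i: "i < n"
      have "0 \<le> (\<Sum>j<Suc m. P i j)" by (rule sum_nonneg, insert Pnn i m, auto)
      moreover have "(\<Sum>j<Suc m. P i j) \<le> (\<Sum>j<n. P i j)"
        by (rule sum_mono2, insert m Pnn i, auto)
      ultimately show "0 \<le> (\<Sum>j<Suc m. P i j) \<and> (\<Sum>j<Suc m. P i j) \<le> 1" using Prow[OF i] by simp
    next
      have "(\<Sum>i<n. \<Sum>j<Suc m. P i j) = (\<Sum>j<Suc m. \<Sum>i<n. P i j)" by (rule sum.swap)
      also have "\<dots> = (\<Sum>j<Suc m. 1)" by (rule sum.cong[OF refl], insert m, auto simp: Pcol)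
      finally show "(\<Sum>i<n. \<Sum>j<Suc m. P i j) = real (Suc m)" by simp
    next
      show "Suc m \<le> n" using m by auto
    qed
  qed
  thus ?thesis using L R by simp
qed

definition phi :: "real \<Rightarrow> real \<Rightarrow> real" where
  "phi t c = (if c * t \<le> 1 then c * t - ln c - 1 else ln t)"

lemma fenchel:
  assumes c: "0 < c" and l: "0 \<le> l" and t: "0 \<le> t" and lt: "0 < l + t"
  shows "ln (l + t) \<le> c * l + phi t c"
proof (cases "c * t \<le> 1")
  case True
  have "ln (c * (l + t)) \<le> c * (l + t) - 1" by (rule ln_le_minus_one, insert c lt, simp)
  moreover have "ln (c * (l + t)) = ln c + ln (l + t)" using c lt by (simp add: ln_mult)
  ultimately show ?thesis using True by (simp add: phi_def algebra_simps)
next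
  case False
  hence tp: "0 < t" using c t by (cases "t = 0", auto)
  have "ln (l + t) = ln t + ln (1 + l / t)"
    using tp l by (simp add: field_simps ln_div)
  also have "ln (1 + l / t) \<le> l / t" by (rule ln_add_one_self_le_self, insert l tp, simp)
  also have "l / t \<le> c * l"
  proof -
    have "1 / t \<le> c" using False tp by (simp add: field_simps)
    hence "l * (1 / t) \<le> l * c" using l by (intro mult_left_mono)
    thus ?thesis by (simp add: mult.commute)
  qed
  finally show ?thesis using False by (simp add: phi_def)
qed

lemma ereal_sum_minf:
  fixes f :: "nat \<Rightarrow> ereal"
  assumes fin: "finite I" and i: "i \<in> I" and fi: "f i = -\<infinity>" and nf: "\<And>j. j \<in> I \<Longrightarrow> f j \<noteq> \<infinity>"
  shows "sum f I = -\<infinity>"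
proof -
  have "sum f I = f i + sum f (I - {i})" using fin i by (simp add: sum.remove)
  moreover have "sum f (I - {i}) \<noteq> \<infinity>" using nf fin by (simp add: sum_Pinfty)
  ultimately show ?thesis using fi by simp
qed



definition avgf :: "real list \<Rightarrow> nat \<Rightarrow> nat \<Rightarrow> real" where
  "avgf y s k = (\<Sum>i = k..<length y. y ! i) / real (s - k)"

definition Pk :: "real list \<Rightarrow> nat \<Rightarrow> nat \<Rightarrow> bool" where
  "Pk y s k \<longleftrightarrow> k < s \<and> ereal (avgf y s k) < (if k = 0 then \<infinity> else ereal (y ! (k - 1))) \<and> y ! k \<le> avgf y s k"

lemma rev_sort_desc:
  fixes y :: "real list"
  assumes "\<And>i j. i \<le> j \<Longrightarrow> j < length y \<Longrightarrow> y ! j \<le> y ! i"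
  shows "rev (sort y) = y"
proof -
  have "sorted (rev y)"
    unfolding sorted_iff_nth_mono using assms by (auto simp: rev_nth)
  hence "sort y = rev y" by (intro properties_for_sort, auto)
  thus ?thesis by simp
qed

lemma psi_unfold:
  assumes "rev (sort y) = y"
  shows "psi s y = (\<Sum>i<(THE k. Pk y s k). elog (y ! i)) + ereal (real (s - (THE k. Pk y s k))) * elog (avgf y s (THE k. Pk y s k))"
  unfolding psi_def Let_def assms Pk_def avgf_def by simp

context
  fixes y :: "real list" and s n :: nat
  assumes desc: "\<And>i j. i \<le> j \<Longrightarrow> j < n \<Longrightarrow> y ! j \<le> y ! i"
    and nn: "\<And>i. i < n \<Longrightarrow> 0 \<le> y ! i"
    and len: "length y = n" and s1: "1 \<le> s" and sn: "s \<le> n"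
begin

lemma avg_step:
  assumes j: "Suc j < s" and yj: "y ! j \<le> avgf y s j"
  shows "avgf y s j \<le> avgf y s (Suc j) \<and> y ! Suc j \<le> avgf y s (Suc j)"
proof -
  define a where "a = real (s - Suc j)"
  have a1: "1 \<le> a" using j a_def by simp
  have sj: "real (s - j) = a + 1" using j a_def by simp
  have jn: "j < n" "Suc j < n" using j sn by auto
  define S where "S k = (\<Sum>i = k..<n. y ! i)" for k
  have Sj: "S j = y ! j + S (Suc j)" unfolding S_def using jn by (simp add: sum.atLeast_Suc_lessThan)
  have avj: "avgf y s j = S j / (a + 1)" unfolding avgf_def S_def len sj ..
  have avj1: "avgf y s (Suc j) = S (Suc j) / a" unfolding avgf_def S_def len a_def ..
  have "S j = avgf y s j * (a + 1)" using avj a1 by simp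
  hence "S (Suc j) \<ge> avgf y s j * a" using Sj yj by (simp add: algebra_simps)
  hence le: "avgf y s j \<le> avgf y s (Suc j)" unfolding avj1 using a1 by (simp add: field_simps)
  have "y ! Suc j \<le> y ! j" using desc[of j "Suc j"] jn by simp
  thus ?thesis using le yj by simp
qed

lemma Pk_exists: "\<exists>k. Pk y s k"
proof -
  define Q where "Q k \<longleftrightarrow> k < s \<and> y ! k \<le> avgf y s k" for k
  have "Q (s - 1)"
  proof -
    have "real (s - (s - 1)) = 1" using s1 by simp
    hence av: "avgf y s (s - 1) = (\<Sum>i = s - 1..<n. y ! i)" unfolding avgf_def len by simp
    have "(\<Sum>i = s - 1..<n. y ! i) = y ! (s - 1) + (\<Sum>i = Suc (s - 1)..<n. y ! i)"
      using s1 sn by (simp add: sum.atLeast_Suc_lessThan)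
    moreover have "0 \<le> (\<Sum>i = Suc (s - 1)..<n. y ! i)" by (rule sum_nonneg, auto simp: nn)
    ultimately show ?thesis unfolding Q_def av using s1 by simp
  qed
  define k where "k = (LEAST k. Q k)"
  have Qk: "Q k" unfolding k_def by (rule LeastI, fact)
  have nQ: "\<not> Q j" if "j < k" for j using not_less_Least[of j Q] that k_def by simp
  have "Pk y s k"
  proof (cases k)
    case 0 thus ?thesis using Qk unfolding Q_def Pk_def by simp
  next
    case (Suc j)
    have js: "Suc j < s" using Qk Suc Q_def by simp
    have jn: "j < n" "Suc j < n" using js sn by auto
    have "\<not> Q j" using nQ Suc by simp
    hence yj: "avgf y s j < y ! j" using js unfolding Q_def by simp
    define a where "a = real (s - Suc j)"
    have a1: "1 \<le> a" using js a_def by simp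
    have sj: "real (s - j) = a + 1" using js a_def by simp
    define S where "S k = (\<Sum>i = k..<n. y ! i)" for k
    have Sj: "S j = y ! j + S (Suc j)" unfolding S_def using jn by (simp add: sum.atLeast_Suc_lessThan)
    have avj: "avgf y s j = S j / (a + 1)" unfolding avgf_def S_def len sj ..
    have avj1: "avgf y s (Suc j) = S (Suc j) / a" unfolding avgf_def S_def len a_def ..
    have "S j < y ! j * (a + 1)" using yj avj a1 by (simp add: field_simps)
    hence "S (Suc j) < y ! j * a" using Sj by (simp add: algebra_simps)
    hence "avgf y s (Suc j) < y ! j" unfolding avj1 using a1 by (simp add: field_simps)
    thus ?thesis using Qk Suc unfolding Pk_def Q_def by simp
  qed
  thus ?thesis by blast
qed

lemma Pk_unique_aux:
  assumes k1: "Pk y s k1" and k2: "Pk y s k2" and lt: "k1 < k2"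
  shows False
proof -
  have k2s: "k2 < s" using k2 Pk_def by simp
  have inv: "y ! j \<le> avgf y s j" if "k1 \<le> j" "j < k2" for j
    using that
  proof (induction j rule: dec_induct)
    case base thus ?case using k1 Pk_def by simp
  next
    case (step j)
    have "Suc j < s" using step k2s by simp
    thus ?case using avg_step step by simp
  qed
  obtain j where j: "k2 = Suc j" using lt by (cases k2, auto)
  have "y ! j \<le> avgf y s j" using inv[of j] lt j by simp
  hence "avgf y s j \<le> avgf y s k2 \<and> y ! k2 \<le> avgf y s k2" using avg_step[of j] j k2s by simp
  hence "y ! j \<le> avgf y s k2" using \<open>y ! j \<le> avgf y s j\<close> by simp
  moreover have "avgf y s k2 < y ! j" using k2 j unfolding Pk_def by simp
  ultimately show False by simp
qed

lemma Pk_unique: "\<exists>!k. Pk y s k"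
  using Pk_exists Pk_unique_aux by (metis linorder_neqE_nat)

lemma Pk_the: "Pk y s (THE k. Pk y s k)"
  using theI'[OF Pk_unique] .

end



definition Lc :: "nat \<Rightarrow> nat \<Rightarrow> real \<Rightarrow> real mat \<Rightarrow> (nat \<Rightarrow> real) \<Rightarrow> real mat \<Rightarrow> real" where
  "Lc n s t U c Y = (\<Sum>i<n. c i * (col U i \<bullet> (Y *\<^sub>v col U i))) + (\<Sum>i<s. phi t (c i))"

definition Cset :: "nat \<Rightarrow> (nat \<Rightarrow> real) set" where
  "Cset n = {c. (\<forall>i<n. 0 < c i) \<and> (\<forall>i j. i \<le> j \<longrightarrow> j < n \<longrightarrow> c i \<le> c j)}"

definition Gam :: "nat \<Rightarrow> nat \<Rightarrow> real \<Rightarrow> real mat \<Rightarrow> real mat \<Rightarrow> ereal" where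
  "Gam n s t U Y = Inf {ereal (Lc n s t U c Y) | c. c \<in> Cset n}"

lemma qf_sum:
  fixes M :: "real mat"
  assumes M: "M \<in> carrier_mat n n" and v: "v \<in> carrier_vec n"
  shows "v \<bullet> (M *\<^sub>v v) = (\<Sum>a<n. v $ a * (\<Sum>b<n. M $$ (a,b) * v $ b))"
proof -
  have "v \<bullet> (M *\<^sub>v v) = (\<Sum>a<n. v $ a * (M *\<^sub>v v) $ a)"
    using v M by (simp add: scalar_prod_def atLeast0LessThan)
  also have "\<dots> = (\<Sum>a<n. v $ a * (\<Sum>b<n. M $$ (a,b) * v $ b))"
    by (rule sum.cong[OF refl], simp add: mult_vec_entry[OF M v])
  finally show ?thesis .
qed

lemma qf_lin:
  fixes X Y :: "real mat" and a b :: real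
  assumes X: "X \<in> carrier_mat n n" and Y: "Y \<in> carrier_mat n n" and v: "v \<in> carrier_vec n"
  shows "v \<bullet> ((a \<cdot>\<^sub>m X + b \<cdot>\<^sub>m Y) *\<^sub>v v) = a * (v \<bullet> (X *\<^sub>v v)) + b * (v \<bullet> (Y *\<^sub>v v))"
proof -
  have M: "a \<cdot>\<^sub>m X + b \<cdot>\<^sub>m Y \<in> carrier_mat n n" using X Y by simp
  have "v \<bullet> ((a \<cdot>\<^sub>m X + b \<cdot>\<^sub>m Y) *\<^sub>v v) = (\<Sum>i<n. v $ i * (\<Sum>j<n. (a * X $$ (i,j) + b * Y $$ (i,j)) * v $ j))"
    unfolding qf_sum[OF M v] by (rule sum.cong[OF refl], rule arg_cong[where f = "\<lambda>x. _ * x"],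
       rule sum.cong[OF refl], insert X Y, auto)
  also have "\<dots> = a * (\<Sum>i<n. v $ i * (\<Sum>j<n. X $$ (i,j) * v $ j)) + b * (\<Sum>i<n. v $ i * (\<Sum>j<n. Y $$ (i,j) * v $ j))"
    by (simp add: sum_distrib_left sum_distrib_right sum.distrib algebra_simps)
  finally show ?thesis unfolding qf_sum[OF X v] qf_sum[OF Y v] .
qed

lemma Lc_lin:
  assumes U: "orthm n U" and X: "X \<in> carrier_mat n n" and Y: "Y \<in> carrier_mat n n"
  shows "Lc n s t U c (a \<cdot>\<^sub>m X + (1 - a) \<cdot>\<^sub>m Y) = a * Lc n s t U c X + (1 - a) * Lc n s t U c Y"
proof -
  have Uc: "U \<in> carrier_mat n n" using U orthm_def by auto
  have cv: "\<And>i. i < n \<Longrightarrow> col U i \<in> carrier_vec n" using Uc by simp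
  have "(\<Sum>i<n. c i * (col U i \<bullet> ((a \<cdot>\<^sub>m X + (1 - a) \<cdot>\<^sub>m Y) *\<^sub>v col U i))) =
     (\<Sum>i<n. c i * (a * (col U i \<bullet> (X *\<^sub>v col U i)) + (1 - a) * (col U i \<bullet> (Y *\<^sub>v col U i))))"
    by (rule sum.cong[OF refl], simp add: qf_lin[OF X Y cv])
  also have "\<dots> = a * (\<Sum>i<n. c i * (col U i \<bullet> (X *\<^sub>v col U i))) + (1 - a) * (\<Sum>i<n. c i * (col U i \<bullet> (Y *\<^sub>v col U i)))"
  proof -
    have "\<And>i. c i * (a * (col U i \<bullet> (X *\<^sub>v col U i)) + (1 - a) * (col U i \<bullet> (Y *\<^sub>v col U i))) =
      a * (c i * (col U i \<bullet> (X *\<^sub>v col U i))) + (1 - a) * (c i * (col U i \<bullet> (Y *\<^sub>v col U i)))"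
      by (simp add: algebra_simps)
    thus ?thesis by (simp only: sum.distrib sum_distrib_left)
  qed
  finally have e: "(\<Sum>i<n. c i * (col U i \<bullet> ((a \<cdot>\<^sub>m X + (1 - a) \<cdot>\<^sub>m Y) *\<^sub>v col U i))) = a * (\<Sum>i<n. c i * (col U i \<bullet> (X *\<^sub>v col U i))) + (1 - a) * (\<Sum>i<n. c i * (col U i \<bullet> (Y *\<^sub>v col U i)))" .
  define SX where "SX = (\<Sum>i<n. c i * (col U i \<bullet> (X *\<^sub>v col U i)))"
  define SY where "SY = (\<Sum>i<n. c i * (col U i \<bullet> (Y *\<^sub>v col U i)))"
  define F where "F = (\<Sum>i<s. phi t (c i))"
  have "Lc n s t U c (a \<cdot>\<^sub>m X + (1 - a) \<cdot>\<^sub>m Y) = a * SX + (1 - a) * SY + F"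
    unfolding Lc_def e SX_def SY_def F_def ..
  moreover have "Lc n s t U c X = SX + F" "Lc n s t U c Y = SY + F" unfolding Lc_def SX_def SY_def F_def by auto
  ultimately show ?thesis by (simp add: algebra_simps)
qed

lemma Gam_concave:
  assumes U: "orthm n U"
  shows "concave_on_psd n (Gam n s t U)"
  unfolding concave_on_psd_def
proof (intro allI impI)
  fix X Y :: "real mat" and a r1 r2 :: real
  assume h: "psd_mat n X \<and> psd_mat n Y \<and> 0 \<le> a \<and> a \<le> 1 \<and> ereal r1 \<le> Gam n s t U X \<and> ereal r2 \<le> Gam n s t U Y"
  have X: "X \<in> carrier_mat n n" and Y: "Y \<in> carrier_mat n n" using h unfolding psd_mat_def sym_mat_def by auto
  show "ereal (a * r1 + (1 - a) * r2) \<le> Gam n s t U (a \<cdot>\<^sub>m X + (1 - a) \<cdot>\<^sub>m Y)"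
    unfolding Gam_def
  proof (rule Inf_greatest)
    fix z assume "z \<in> {ereal (Lc n s t U c (a \<cdot>\<^sub>m X + (1 - a) \<cdot>\<^sub>m Y)) | c. c \<in> Cset n}"
    then obtain c where c: "c \<in> Cset n" and z: "z = ereal (Lc n s t U c (a \<cdot>\<^sub>m X + (1 - a) \<cdot>\<^sub>m Y))" by blast
    have "Gam n s t U X \<le> ereal (Lc n s t U c X)" unfolding Gam_def by (rule Inf_lower, use c in blast)
    hence r1: "r1 \<le> Lc n s t U c X" using h by (meson ereal_less_eq(3) order_trans)
    have "Gam n s t U Y \<le> ereal (Lc n s t U c Y)" unfolding Gam_def by (rule Inf_lower, use c in blast)
    hence r2: "r2 \<le> Lc n s t U c Y" using h by (meson ereal_less_eq(3) order_trans)
    have "a * r1 + (1 - a) * r2 \<le> a * Lc n s t U c X + (1 - a) * Lc n s t U c Y"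
      using h r1 r2 by (intro add_mono mult_left_mono, auto)
    thus "ereal (a * r1 + (1 - a) * r2) \<le> z" unfolding z Lc_lin[OF U X Y] by simp
  qed
qed

lemma orth_P:
  assumes U: "orthm n U" and V: "orthm n V" and i: "i < n"
  shows "(\<Sum>k<n. (\<Sum>a<n. U $$ (a,i) * V $$ (a,k))^2) = 1"
proof -
  have "(\<Sum>k<n. (\<Sum>a<n. U $$ (a,i) * V $$ (a,k))^2) =
        (\<Sum>k<n. \<Sum>a<n. \<Sum>b<n. (U $$ (a,i) * U $$ (b,i)) * (V $$ (a,k) * V $$ (b,k)))"
    by (simp add: power2_eq_square sum_distrib_left sum_distrib_right mult.commute mult.left_commute)
  also have "\<dots> = (\<Sum>a<n. \<Sum>k<n. \<Sum>b<n. (U $$ (a,i) * U $$ (b,i)) * (V $$ (a,k) * V $$ (b,k)))"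
    by (rule sum.swap)
  also have "\<dots> = (\<Sum>a<n. \<Sum>b<n. \<Sum>k<n. (U $$ (a,i) * U $$ (b,i)) * (V $$ (a,k) * V $$ (b,k)))"
    by (rule sum.cong[OF refl], rule sum.swap)
  also have "\<dots> = (\<Sum>a<n. \<Sum>b<n. (U $$ (a,i) * U $$ (b,i)) * (if a = b then 1 else 0))"
    by (rule sum.cong[OF refl], rule sum.cong[OF refl], simp add: sum_distrib_left[symmetric] orthm_rows[OF V])
  also have "\<dots> = (\<Sum>a<n. U $$ (a,i) * U $$ (a,i))"
    by (rule sum.cong[OF refl], simp add: if_distrib cong: if_cong)
  also have "\<dots> = 1" using orthm_cols[OF U i i] by simp
  finally show ?thesis .
qed

lemma elog_sum_le:
  fixes x b :: "nat \<Rightarrow> real"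
  assumes nn: "\<And>i. i < s \<Longrightarrow> 0 \<le> x i"
    and le: "\<And>i. i < s \<Longrightarrow> 0 < x i \<Longrightarrow> ln (x i) \<le> b i"
  shows "(\<Sum>i<s. elog (x i)) \<le> ereal (\<Sum>i<s. b i)"
proof (cases "\<forall>i<s. 0 < x i")
  case True
  have "(\<Sum>i<s. elog (x i)) = (\<Sum>i<s. ereal (ln (x i)))"
    by (rule sum.cong[OF refl], insert True, auto simp: elog_def)
  also have "\<dots> = ereal (\<Sum>i<s. ln (x i))" by simp
  also have "\<dots> \<le> ereal (\<Sum>i<s. b i)" using le True by (auto intro!: sum_mono)
  finally show ?thesis .
next
  case False
  then obtain i where i: "i < s" "\<not> 0 < x i" by blast
  have "(\<Sum>i<s. elog (x i)) = -\<infinity>"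
    by (rule ereal_sum_minf[of _ i], insert i, auto simp: elog_def)
  thus ?thesis by simp
qed

lemma Gam_major:
  assumes U: "orthm n U" and sn: "s \<le> n" and t: "0 \<le> t" and Y: "psd_mat n Y"
  shows "Phi s Y t \<le> Gam n s t U Y"
  unfolding Gam_def
proof (rule Inf_greatest)
  fix z assume "z \<in> {ereal (Lc n s t U c Y) | c. c \<in> Cset n}"
  then obtain c where c: "c \<in> Cset n" and z: "z = ereal (Lc n s t U c Y)" by blast
  have cpos: "\<And>i. i < n \<Longrightarrow> 0 < c i" and cmono: "\<And>i j. i \<le> j \<Longrightarrow> j < n \<Longrightarrow> c i \<le> c j"
    using c unfolding Cset_def by auto
  have Uc: "U \<in> carrier_mat n n" using U orthm_def by auto
  have symY: "sym_mat n Y" using Y psd_mat_def by auto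
  obtain V lam where V: "orthm n V" and YV: "Y = V * dmat n lam * transpose_mat V"
    and lmono: "\<forall>i j. i \<le> j \<longrightarrow> j < n \<longrightarrow> lam j \<le> lam i" and ev: "eigvals Y = map lam [0..<n]"
    using spectral_sorted[OF symY] by blast
  have Vc: "V \<in> carrier_mat n n" using V orthm_def by auto
  have lnn: "\<And>i. i < n \<Longrightarrow> 0 \<le> lam i" using psd_eig_nonneg[OF Y V YV] .
  define P where "P i k = (\<Sum>a<n. V $$ (a,k) * U $$ (a,i))^2" for i k
  have qf: "col U i \<bullet> (Y *\<^sub>v col U i) = (\<Sum>k<n. P i k * lam k)" if i: "i < n" for i
  proof -
    have "col U i \<bullet> (Y *\<^sub>v col U i) = (\<Sum>k<n. lam k * (\<Sum>a<n. V $$ (a,k) * col U i $ a)^2)"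
      unfolding YV by (rule quad_udu[OF Vc], insert Uc i, auto)
    also have "\<dots> = (\<Sum>k<n. P i k * lam k)"
      by (rule sum.cong[OF refl], insert Uc i, auto simp: P_def intro!: sum.cong)
    finally show ?thesis .
  qed
  have Prow: "(\<Sum>k<n. P i k) = 1" if "i < n" for i
    unfolding P_def using orth_P[OF U V that] by (simp add: mult.commute)
  have Pcol: "(\<Sum>i<n. P i k) = 1" if "k < n" for k
    unfolding P_def using orth_P[OF V U that] by simp
  have "(\<Sum>k<n. c k * lam k) \<le> (\<Sum>i<n. c i * (\<Sum>k<n. P i k * lam k))"
    by (rule trace_ineq[OF cmono _ lnn _ Prow Pcol], insert lmono, auto simp: P_def)
  also have "\<dots> = (\<Sum>i<n. c i * (col U i \<bullet> (Y *\<^sub>v col U i)))"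
    by (rule sum.cong[OF refl], simp add: qf)
  finally have tr: "(\<Sum>k<n. c k * lam k) \<le> (\<Sum>i<n. c i * (col U i \<bullet> (Y *\<^sub>v col U i)))" .
  have "(\<Sum>k<s. c k * lam k) \<le> (\<Sum>k<n. c k * lam k)"
  proof (rule sum_mono2)
    fix b assume "b \<in> {..<n} - {..<s}"
    hence b: "b < n" by auto
    show "0 \<le> c b * lam b" using cpos[OF b] lnn[OF b] by simp
  qed (use sn in auto)
  with tr have tr2: "(\<Sum>k<s. c k * lam k + phi t (c k)) \<le> Lc n s t U c Y"
    unfolding Lc_def by (simp add: sum.distrib)
  have "Phi s Y t = (\<Sum>i<s. elog (lam i + t))"
    unfolding Phi_def ev by (rule sum.cong[OF refl], insert sn, auto)
  also have "\<dots> \<le> ereal (\<Sum>k<s. c k * lam k + phi t (c k))"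
    by (rule elog_sum_le, insert sn lnn t cpos, auto intro!: fenchel)
  also have "\<dots> \<le> z" unfolding z using tr2 by simp
  finally show "Phi s Y t \<le> z" .
qed



lemma split_sum:
  fixes f :: "nat \<Rightarrow> 'a::comm_monoid_add"
  assumes "k \<le> n"
  shows "(\<Sum>i<n. f i) = (\<Sum>i<k. f i) + (\<Sum>i=k..<n. f i)"
  using assms by (simp add: atLeast0LessThan[symmetric] sum.atLeastLessThan_concat)

lemma Gam_attain:
  fixes \<mu> :: "nat \<Rightarrow> real"
  assumes U: "orthm n U" and XU: "X = U * dmat n \<mu> * transpose_mat U"
    and mdesc: "\<And>i j. i \<le> j \<Longrightarrow> j < n \<Longrightarrow> \<mu> j \<le> \<mu> i"
    and mnn: "\<And>i. i < n \<Longrightarrow> 0 \<le> \<mu> i"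
    and s1: "1 \<le> s" and sn: "s \<le> n" and t: "0 \<le> t"
    and y: "y = map (\<lambda>i. \<mu> i + (if i < s then t else 0)) [0..<n]"
  shows "Gam n s t U X \<le> psi s y"
proof -
  have len: "length y = n" using y by simp
  have yi: "\<And>i. i < n \<Longrightarrow> y ! i = \<mu> i + (if i < s then t else 0)" using y by simp
  have desc: "\<And>i j. i \<le> j \<Longrightarrow> j < n \<Longrightarrow> y ! j \<le> y ! i"
  proof -
    fix i j assume ij: "i \<le> j" "j < n"
    show "y ! j \<le> y ! i" using yi[of i] yi[of j] ij mdesc[OF ij] t by auto
  qed
  have nn: "\<And>i. i < n \<Longrightarrow> 0 \<le> y ! i" using yi mnn t by auto
  have rs: "rev (sort y) = y" by (rule rev_sort_desc, insert desc len, auto)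
  define k where "k = (THE k. Pk y s k)"
  have Pk: "Pk y s k" unfolding k_def by (rule Pk_the[OF desc nn len s1 sn])
  define A where "A = avgf y s k"
  have ks: "k < s" and hA: "0 < k \<Longrightarrow> A < y ! (k - 1)" and hyk: "y ! k \<le> A"
    using Pk unfolding Pk_def A_def by (auto split: if_splits)
  have kn: "k < n" using ks sn by simp
  have psi: "psi s y = (\<Sum>i<k. elog (y ! i)) + ereal (real (s - k)) * elog A"
    unfolding psi_unfold[OF rs] k_def[symmetric] A_def ..
  have skpos: "0 < real (s - k)" using ks by simp
  have tailsum: "(\<Sum>i=k..<n. y ! i) = A * real (s - k)"
    unfolding A_def avgf_def len using skpos by simp
  have tailmu: "(\<Sum>i=k..<n. y ! i) = (\<Sum>i=k..<n. \<mu> i) + real (s - k) * t"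
  proof -
    have "(\<Sum>i=k..<n. y ! i) = (\<Sum>i=k..<n. \<mu> i + (if i < s then t else 0))"
      by (rule sum.cong[OF refl], simp add: yi)
    also have "\<dots> = (\<Sum>i=k..<n. \<mu> i) + (\<Sum>i=k..<n. (if i < s then t else 0))" by (simp add: sum.distrib)
    also have "(\<Sum>i=k..<n. (if i < s then t else 0)) = (\<Sum>i\<in>{k..<n} \<inter> {i. i < s}. t)"
      by (simp add: sum.If_cases)
    also have "{k..<n} \<inter> {i. i < s} = {k..<s}" using sn by auto
    finally show ?thesis by simp
  qed
  have A0: "0 \<le> A" using hyk nn[OF kn] by simp
  have ypos: "0 < y ! i" if "i < k" for i
  proof -
    have "y ! (k - 1) \<le> y ! i" by (rule desc, insert that kn, auto)
    thus ?thesis using hA that A0 by simp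
  qed
  have yk: "y ! i = \<mu> i + t" if "i < k" for i using yi[of i] that ks kn by simp
  have qf: "\<And>i. i < n \<Longrightarrow> col U i \<bullet> (X *\<^sub>v col U i) = \<mu> i" unfolding XU by (rule quad_udu_col[OF U])
  have Lc_eq: "Lc n s t U c X = (\<Sum>i<k. c i * \<mu> i + phi t (c i)) + ((\<Sum>i=k..<n. c i * \<mu> i) + (\<Sum>i=k..<s. phi t (c i)))" for c
  proof -
    have "Lc n s t U c X = (\<Sum>i<n. c i * \<mu> i) + (\<Sum>i<s. phi t (c i))"
      unfolding Lc_def by (simp add: qf)
    also have "\<dots> = ((\<Sum>i<k. c i * \<mu> i) + (\<Sum>i=k..<n. c i * \<mu> i)) + ((\<Sum>i<k. phi t (c i)) + (\<Sum>i=k..<s. phi t (c i)))"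
      using split_sum[of k n "\<lambda>i. c i * \<mu> i"] split_sum[of k s "\<lambda>i. phi t (c i)"] kn ks by simp
    finally show ?thesis by (simp add: sum.distrib)
  qed
  have headsum: "(\<Sum>i<k. c i * \<mu> i + phi t (c i)) = (\<Sum>i<k. ln (y ! i))" if "\<And>i. i < k \<Longrightarrow> c i = 1 / y ! i" for c
  proof (rule sum.cong[OF refl])
    fix i assume "i \<in> {..<k}"
    hence i: "i < k" by simp
    have yp: "0 < y ! i" using ypos[OF i] .
    have ci: "c i = 1 / y ! i" by (rule that[OF i])
    have ct: "1 / y ! i * t \<le> 1" using yp yk[OF i] mnn[of i] i kn by (simp add: field_simps)
    have "c i * \<mu> i + phi t (c i) = (\<mu> i / y ! i + 1 / y ! i * t) - ln (1 / y ! i) - 1"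
      unfolding ci phi_def using ct by simp
    also have "\<mu> i / y ! i + 1 / y ! i * t = (\<mu> i + t) / y ! i" using yp by (simp add: field_simps)
    also have "(\<mu> i + t) / y ! i = 1" using yk[OF i] yp by simp
    also have "1 - ln (1 / y ! i) - 1 = ln (y ! i)" using yp by (simp add: ln_div)
    finally show "c i * \<mu> i + phi t (c i) = ln (y ! i)" .
  qed
  have Cmem: "(\<lambda>i. if i < k then 1 / y ! i else M) \<in> Cset n" if M: "0 < M" and Mk: "0 < k \<Longrightarrow> 1 / y ! (k - 1) \<le> M" for M
    unfolding Cset_def
  proof (intro CollectI conjI allI impI)
    fix i assume "i < n" thus "0 < (if i < k then 1 / y ! i else M)" using ypos M by simp
  next
    fix i j assume ij: "i \<le> j" "j < n"
    show "(if i < k then 1 / y ! i else M) \<le> (if j < k then 1 / y ! j else M)"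
    proof (cases "j < k")
      case True
      hence "y ! j \<le> y ! i" using desc ij kn by simp
      thus ?thesis using True ij ypos[of j] by (simp add: frac_le)
    next
      case False
      show ?thesis
      proof (cases "i < k")
        case True
        have "y ! (k - 1) \<le> y ! i" by (rule desc, insert True kn, auto)
        hence "1 / y ! i \<le> 1 / y ! (k - 1)" using ypos[of "k - 1"] True by (simp add: frac_le)
        thus ?thesis using Mk True False by simp
      qed (use False in simp)
    qed
  qed
  show ?thesis
  proof (cases "0 < A")
    case Apos: True
    define c where "c i = (if i < k then 1 / y ! i else 1 / A)" for i
    have cC: "c \<in> Cset n" unfolding c_def
    proof (rule Cmem)
      show "0 < 1 / A" using Apos by simp
      assume "0 < k"
      hence "A < y ! (k - 1)" using hA by simp
      thus "1 / y ! (k - 1) \<le> 1 / A" using Apos by (simp add: frac_le)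
    qed
    have At: "t \<le> A" using hyk yi[OF kn] ks mnn[OF kn] by simp
    have tail: "(\<Sum>i=k..<n. c i * \<mu> i) + (\<Sum>i=k..<s. phi t (c i)) = real (s - k) * ln A"
    proof -
      have "(\<Sum>i=k..<n. c i * \<mu> i) = (\<Sum>i=k..<n. \<mu> i) / A" unfolding c_def by (simp add: sum_divide_distrib)
      moreover have "(\<Sum>i=k..<s. phi t (c i)) = real (s - k) * (t / A - ln (1 / A) - 1)"
        unfolding c_def phi_def using At Apos by (simp add: field_simps)
      moreover have "(\<Sum>i=k..<n. \<mu> i) = A * real (s - k) - real (s - k) * t" using tailsum tailmu by simp
      moreover have "ln (1 / A) = - ln A" using Apos by (simp add: ln_div)
      ultimately have "(\<Sum>i=k..<n. c i * \<mu> i) = (A * real (s - k) - real (s - k) * t) / A"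
        and "(\<Sum>i=k..<s. phi t (c i)) = real (s - k) * (t / A + ln A - 1)" by simp_all
      moreover have "(A * real (s - k) - real (s - k) * t) / A + real (s - k) * (t / A + ln A - 1) = real (s - k) * ln A"
        using Apos by (simp add: field_simps)
      ultimately show ?thesis by simp
    qed
    have hc: "\<And>i. i < k \<Longrightarrow> c i = 1 / y ! i" by (simp add: c_def)
    have "Lc n s t U c X = (\<Sum>i<k. ln (y ! i)) + real (s - k) * ln A"
      using Lc_eq[of c] tail headsum[of c, OF hc] by simp
    hence "psi s y = ereal (Lc n s t U c X)"
      unfolding psi using ypos Apos by (simp add: elog_def)
    moreover have "Gam n s t U X \<le> ereal (Lc n s t U c X)" unfolding Gam_def by (rule Inf_lower, use cC in blast)
    ultimately show ?thesis by simp
  next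
    case False
    hence A00: "A = 0" using A0 by simp
    have "(\<Sum>i=k..<n. y ! i) = 0" using tailsum A00 by simp
    hence yz: "\<forall>i\<in>{k..<n}. y ! i = 0" using nn by (subst (asm) sum_nonneg_eq_0_iff, auto)
    have "y ! k = 0" using yz kn by simp
    hence t0: "t = 0" using yi[OF kn] ks mnn[OF kn] t by auto
    have muz: "\<And>i. k \<le> i \<Longrightarrow> i < n \<Longrightarrow> \<mu> i = 0" using yz yi mnn t0 by fastforce
    have psi_m: "psi s y = -\<infinity>"
    proof -
      have "ereal (real (s - k)) * elog A = -\<infinity>" using A00 skpos by (simp add: elog_def)
      moreover have "(\<Sum>i<k. elog (y ! i)) = ereal (\<Sum>i<k. ln (y ! i))"
        using ypos by (simp add: elog_def)
      ultimately show ?thesis unfolding psi by simp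
    qed
    have "Gam n s t U X = -\<infinity>"
    proof (rule ereal_bot)
      fix B :: real
      define S where "S = (\<Sum>i<k. ln (y ! i))"
      define K where "K = \<bar>B\<bar> + \<bar>S\<bar> + (if 0 < k then 1 / y ! (k - 1) else 0) + 1"
      define c where "c i = (if i < k then 1 / y ! i else exp K)" for i
      have Kge: "0 < k \<Longrightarrow> 1 / y ! (k - 1) \<le> K" unfolding K_def by simp
      have cC: "c \<in> Cset n" unfolding c_def
      proof (rule Cmem)
        show "0 < exp K" by simp
        assume k0: "0 < k"
        have "K \<le> exp K" using exp_ge_add_one_self[of K] by linarith
        thus "1 / y ! (k - 1) \<le> exp K" using Kge[OF k0] by simp
      qed
      have tail: "(\<Sum>i=k..<n. c i * \<mu> i) + (\<Sum>i=k..<s. phi t (c i)) = - real (s - k) * (K + 1)"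
      proof -
        have "(\<Sum>i=k..<n. c i * \<mu> i) = 0" by (rule sum.neutral, auto simp: muz)
        moreover have "(\<Sum>i=k..<s. phi t (c i)) = real (s - k) * (- K - 1)"
          unfolding c_def phi_def t0 by simp
        ultimately show ?thesis by (simp add: algebra_simps)
      qed
      have hc: "\<And>i. i < k \<Longrightarrow> c i = 1 / y ! i" by (simp add: c_def)
      have "Lc n s t U c X = S - real (s - k) * (K + 1)"
        using Lc_eq[of c] tail headsum[of c, OF hc] unfolding S_def by simp
      also have "\<dots> \<le> S - (K + 1)"
      proof -
        have "1 \<le> real (s - k)" using ks by simp
        moreover have "0 \<le> K + 1" unfolding K_def using ypos[of "k - 1"] by (auto intro!: add_nonneg_nonneg)
        ultimately have "K + 1 \<le> real (s - k) * (K + 1)" using mult_right_mono[of 1 "real (s - k)" "K + 1"] by simp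
        thus ?thesis by simp
      qed
      also have "\<dots> \<le> B"
      proof -
        have h: "0 \<le> (if 0 < k then 1 / y ! (k - 1) else 0)" using ypos[of "k - 1"] by (simp add: less_imp_le)
        show ?thesis unfolding K_def using h abs_ge_self[of S] abs_ge_minus_self[of B] by linarith
      qed
      finally have "Lc n s t U c X \<le> B" .
      moreover have "Gam n s t U X \<le> ereal (Lc n s t U c X)" unfolding Gam_def by (rule Inf_lower, use cC in blast)
      ultimately show "Gam n s t U X \<le> ereal B" by (meson ereal_less_eq(3) order_trans)
    qed
    thus ?thesis using psi_m by simp
  qed
qed



lemma upt_split: "i \<le> j \<Longrightarrow> [i..<j + m] = [i..<j] @ [j..<j + m]"
  by (rule upt_add_eq_append)

lemma upt_split': "i \<le> j \<Longrightarrow> j \<le> n \<Longrightarrow> [i..<n] = [i..<j] @ [j..<n]"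
  using upt_add_eq_append[of i j "n - j"] by simp

lemma mset_01:
  fixes q :: "nat \<Rightarrow> real"
  assumes "\<forall>i\<in>set xs. q i = 0 \<or> q i = 1"
  shows "mset (map (\<lambda>i. a * q i) xs) =
    replicate_mset (length (filter (\<lambda>i. q i = 1) xs)) a + replicate_mset (length xs - length (filter (\<lambda>i. q i = 1) xs)) 0"
  using assms
proof (induction xs)
  case Nil thus ?case by simp
next
  case (Cons x xs)
  have le: "length (filter (\<lambda>i. q i = 1) xs) \<le> length xs" by (rule length_filter_le)
  show ?case
  proof (cases "q x = 1")
    case True thus ?thesis using Cons by simp
  next
    case False
    hence "q x = 0" using Cons by simp
    thus ?thesis using Cons le False by (simp add: Suc_diff_le)
  qed
qed

lemma sumlist_01:
  fixes q :: "nat \<Rightarrow> real"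
  assumes "\<forall>i\<in>set xs. q i = 0 \<or> q i = 1"
  shows "sum_list (map q xs) = real (length (filter (\<lambda>i. q i = 1) xs))"
  using assms by (induction xs, auto)

lemma sort_mset_eq: "mset xs = mset ys \<Longrightarrow> sort xs = sort (ys :: real list)"
  by (metis mset_sort properties_for_sort sorted_sort)

lemma udu_comb:
  assumes U: "U \<in> carrier_mat n n"
  shows "a \<cdot>\<^sub>m (U * dmat n d1 * transpose_mat U) + b \<cdot>\<^sub>m (U * dmat n d2 * transpose_mat U) =
         U * dmat n (\<lambda>i. a * d1 i + b * d2 i) * transpose_mat U"
proof (rule eq_matI)
  fix i j assume "i < dim_row (U * dmat n (\<lambda>i. a * d1 i + b * d2 i) * transpose_mat U)"
     "j < dim_col (U * dmat n (\<lambda>i. a * d1 i + b * d2 i) * transpose_mat U)"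
  hence ij: "i < n" "j < n" using udu_carrier[OF U] carrier_matD[OF U] by auto
  have "(a \<cdot>\<^sub>m (U * dmat n d1 * transpose_mat U) + b \<cdot>\<^sub>m (U * dmat n d2 * transpose_mat U)) $$ (i,j) =
     a * (U * dmat n d1 * transpose_mat U) $$ (i,j) + b * (U * dmat n d2 * transpose_mat U) $$ (i,j)"
    using ij carrier_matD[OF udu_carrier[OF U, of d1]] carrier_matD[OF udu_carrier[OF U, of d2]] by simp
  also have "\<dots> = (U * dmat n (\<lambda>i. a * d1 i + b * d2 i) * transpose_mat U) $$ (i,j)"
    unfolding udu_entry[OF U ij] by (simp add: sum_distrib_left sum.distrib[symmetric] algebra_simps)
  finally show "(a \<cdot>\<^sub>m (U * dmat n d1 * transpose_mat U) + b \<cdot>\<^sub>m (U * dmat n d2 * transpose_mat U)) $$ (i,j) =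
     (U * dmat n (\<lambda>i. a * d1 i + b * d2 i) * transpose_mat U) $$ (i,j)" .
qed (use udu_carrier[OF U] carrier_matD[OF U] in auto)

lemma dmat_cong: "(\<And>i. i < n \<Longrightarrow> d i = d' i) \<Longrightarrow> dmat n d = dmat n d'"
  unfolding dmat_def by (auto intro!: eq_matI)



lemma lower_bound:
  fixes \<mu> :: "nat \<Rightarrow> real" and f :: "real mat \<Rightarrow> ereal"
  assumes conc: "concave_on_psd n f" and major: "\<And>Y. psd_mat n Y \<Longrightarrow> Phi s Y t \<le> f Y"
    and U: "orthm n U" and XU: "X = U * dmat n \<mu> * transpose_mat U"
    and mdesc: "\<And>i j. i \<le> j \<Longrightarrow> j < n \<Longrightarrow> \<mu> j \<le> \<mu> i"
    and mnn: "\<And>i. i < n \<Longrightarrow> 0 \<le> \<mu> i"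
    and s1: "1 \<le> s" and sn: "s \<le> n" and t: "0 \<le> t"
    and y: "y = map (\<lambda>i. \<mu> i + (if i < s then t else 0)) [0..<n]"
  shows "psi s y \<le> f X"
proof -
  have Uc: "U \<in> carrier_mat n n" using U orthm_def by auto
  have len: "length y = n" using y by simp
  have yi: "\<And>i. i < n \<Longrightarrow> y ! i = \<mu> i + (if i < s then t else 0)" using y by simp
  have desc: "\<And>i j. i \<le> j \<Longrightarrow> j < n \<Longrightarrow> y ! j \<le> y ! i"
  proof -
    fix i j assume ij: "i \<le> j" "j < n"
    show "y ! j \<le> y ! i" using yi[of i] yi[of j] ij mdesc[OF ij] t by auto
  qed
  have nn: "\<And>i. i < n \<Longrightarrow> 0 \<le> y ! i" using yi mnn t by auto
  have rs: "rev (sort y) = y" by (rule rev_sort_desc, insert desc len, auto)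
  define k where "k = (THE k. Pk y s k)"
  have Pk: "Pk y s k" unfolding k_def by (rule Pk_the[OF desc nn len s1 sn])
  define A where "A = avgf y s k"
  have ks: "k < s" and hA: "0 < k \<Longrightarrow> A < y ! (k - 1)" and hyk: "y ! k \<le> A"
    using Pk unfolding Pk_def A_def by (auto split: if_splits)
  have kn: "k < n" using ks sn by simp
  have psi: "psi s y = (\<Sum>i<k. elog (y ! i)) + ereal (real (s - k)) * elog A"
    unfolding psi_unfold[OF rs] k_def[symmetric] A_def ..
  have skpos: "0 < real (s - k)" using ks by simp
  have tailsum: "(\<Sum>i=k..<n. y ! i) = A * real (s - k)"
    unfolding A_def avgf_def len using skpos by simp
  have tailmu: "(\<Sum>i=k..<n. y ! i) = (\<Sum>i=k..<n. \<mu> i) + real (s - k) * t"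
  proof -
    have "(\<Sum>i=k..<n. y ! i) = (\<Sum>i=k..<n. \<mu> i + (if i < s then t else 0))"
      by (rule sum.cong[OF refl], simp add: yi)
    also have "\<dots> = (\<Sum>i=k..<n. \<mu> i) + (\<Sum>i=k..<n. (if i < s then t else 0))" by (simp add: sum.distrib)
    also have "(\<Sum>i=k..<n. (if i < s then t else 0)) = (\<Sum>i\<in>{k..<n} \<inter> {i. i < s}. t)"
      by (simp add: sum.If_cases)
    also have "{k..<n} \<inter> {i. i < s} = {k..<s}" using sn by auto
    finally show ?thesis by simp
  qed
  have A0: "0 \<le> A" using hyk nn[OF kn] by simp
  have ypos: "0 < y ! i" if "i < k" for i
  proof -
    have "y ! (k - 1) \<le> y ! i" by (rule desc, insert that kn, auto)
    thus ?thesis using hA that A0 by simp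
  qed
  have yk: "y ! i = \<mu> i + t" if "i < k" for i using yi[of i] that ks kn by simp
  show ?thesis
  proof (cases "0 < A")
    case False
    hence A00: "A = 0" using A0 by simp
    have "ereal (real (s - k)) * elog A = -\<infinity>" using A00 skpos by (simp add: elog_def)
    moreover have "(\<Sum>i<k. elog (y ! i)) = ereal (\<Sum>i<k. ln (y ! i))"
      using ypos by (simp add: elog_def)
    ultimately show ?thesis unfolding psi by simp
  next
    case Apos: True
    define G where "G = (\<Sum>i<k. ln (y ! i)) + real (s - k) * ln A"
    have psiG: "psi s y = ereal G"
      unfolding psi G_def using ypos Apos by (simp add: elog_def)
    define Ax where "Ax = A - t"
    have summu: "(\<Sum>i=k..<n. \<mu> i) = real (s - k) * Ax" using tailsum tailmu unfolding Ax_def by (simp add: algebra_simps)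
    have Ax0: "0 \<le> Ax"
    proof -
      have "0 \<le> (\<Sum>i=k..<n. \<mu> i)" by (rule sum_nonneg, insert mnn, auto)
      thus ?thesis using summu skpos by (simp add: zero_le_mult_iff)
    qed
    have muAx: "\<mu> i \<le> Ax" if "k \<le> i" "i < n" for i
    proof -
      have "\<mu> i \<le> \<mu> k" using mdesc that by simp
      moreover have "\<mu> k + t \<le> A" using hyk yi[OF kn] ks by simp
      ultimately show ?thesis unfolding Ax_def by simp
    qed
    have muk1: "Ax < \<mu> i" if "i < k" for i
    proof -
      have "y ! (k - 1) \<le> y ! i" by (rule desc, insert that kn, auto)
      moreover have "A < y ! (k - 1)" using hA that by simp
      ultimately show ?thesis using yk[OF that] unfolding Ax_def by simp
    qed
    define dq where "dq q i = (if i < k then \<mu> i else Ax * q i)" for q :: "nat \<Rightarrow> real" and i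
    define M where "M q = U * dmat n (dq q) * transpose_mat U" for q
    define Fr where "Fr q = {i \<in> {k..<n}. 0 < q i \<and> q i < 1}" for q :: "nat \<Rightarrow> real"
    have finFr: "finite (Fr q)" for q unfolding Fr_def by simp
    have Mpsd: "psd_mat n (M q)" if "\<And>i. k \<le> i \<Longrightarrow> i < n \<Longrightarrow> 0 \<le> q i" for q
      unfolding M_def by (rule psd_udu[OF Uc], insert that mnn Ax0, auto simp: dq_def)
    have base: "ereal G \<le> f (M q)" if q01: "\<And>i. k \<le> i \<Longrightarrow> i < n \<Longrightarrow> q i = 0 \<or> q i = 1"
      and qs: "(\<Sum>i=k..<n. q i) = real (s - k)" for q
    proof -
      define Lf where "Lf i = (if i < k then \<mu> i else if i < s then Ax else 0)" for i
      have ones: "length (filter (\<lambda>i. q i = 1) [k..<n]) = s - k"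
      proof -
        have "sum_list (map q [k..<n]) = real (length (filter (\<lambda>i. q i = 1) [k..<n]))"
          by (rule sumlist_01, insert q01, auto)
        moreover have "sum_list (map q [k..<n]) = (\<Sum>i=k..<n. q i)"
          by (simp add: interv_sum_list_conv_sum_set_nat)
        ultimately show ?thesis using qs by simp
      qed
      have m1: "mset (map (dq q) [0..<n]) = mset (map \<mu> [0..<k]) + (replicate_mset (s - k) Ax + replicate_mset (n - s) 0)"
      proof -
        have "map (dq q) [0..<n] = map (dq q) [0..<k] @ map (dq q) [k..<n]"
          using upt_split'[of 0 k n] kn by simp
        also have "map (dq q) [0..<k] = map \<mu> [0..<k]" by (auto simp: dq_def)
        also have "map (dq q) [k..<n] = map (\<lambda>i. Ax * q i) [k..<n]" by (auto simp: dq_def)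
        finally have "mset (map (dq q) [0..<n]) = mset (map \<mu> [0..<k]) + mset (map (\<lambda>i. Ax * q i) [k..<n])" by simp
        also have "mset (map (\<lambda>i. Ax * q i) [k..<n]) = replicate_mset (s - k) Ax + replicate_mset (n - s) 0"
          using mset_01[of "[k..<n]" q Ax] q01 ones sn ks by auto
        finally show ?thesis .
      qed
      have m2: "mset (map Lf [0..<n]) = mset (map \<mu> [0..<k]) + (replicate_mset (s - k) Ax + replicate_mset (n - s) 0)"
      proof -
        have "map Lf [0..<n] = map Lf [0..<k] @ map Lf [k..<s] @ map Lf [s..<n]"
          using upt_split'[of 0 k n] upt_split'[of k s n] kn ks sn by simp
        also have "map Lf [0..<k] = map \<mu> [0..<k]" by (auto simp: Lf_def)
        also have "map Lf [k..<s] = replicate (s - k) Ax" by (auto simp: Lf_def intro!: nth_equalityI)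
        also have "map Lf [s..<n] = replicate (n - s) 0" using ks by (auto simp: Lf_def intro!: nth_equalityI)
        finally show ?thesis by simp
      qed
      have Ldesc: "\<And>i j. i \<le> j \<Longrightarrow> j < length (map Lf [0..<n]) \<Longrightarrow> map Lf [0..<n] ! j \<le> map Lf [0..<n] ! i"
      proof -
        fix i j assume ij: "i \<le> j" "j < length (map Lf [0..<n])"
        hence jn: "j < n" by simp
        show "map Lf [0..<n] ! j \<le> map Lf [0..<n] ! i"
          using ij jn mdesc[of i j] muk1[of i] Ax0 by (auto simp: Lf_def)
      qed
      have ev: "eigvals (M q) = map Lf [0..<n]"
      proof -
        have "eigvals (M q) = rev (sort (map (dq q) [0..<n]))" unfolding M_def by (rule eigvals_udu[OF U])
        also have "sort (map (dq q) [0..<n]) = sort (map Lf [0..<n])" by (rule sort_mset_eq, simp only: m1 m2)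
        also have "rev (sort (map Lf [0..<n])) = map Lf [0..<n]" by (rule rev_sort_desc[OF Ldesc])
        finally show ?thesis .
      qed
      have "Phi s (M q) t = (\<Sum>i<s. elog (Lf i + t))"
        unfolding Phi_def ev by (rule sum.cong[OF refl], insert sn, auto)
      also have "\<dots> = (\<Sum>i<k. elog (Lf i + t)) + (\<Sum>i=k..<s. elog (Lf i + t))"
        by (rule split_sum, insert ks, simp)
      also have "(\<Sum>i<k. elog (Lf i + t)) = ereal (\<Sum>i<k. ln (y ! i))"
      proof -
        have "(\<Sum>i<k. elog (Lf i + t)) = (\<Sum>i<k. ereal (ln (y ! i)))"
          by (rule sum.cong[OF refl], insert ypos yk, auto simp: Lf_def elog_def)
        thus ?thesis by simp
      qed
      also have "(\<Sum>i=k..<s. elog (Lf i + t)) = ereal (real (s - k) * ln A)"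
      proof -
        have "(\<Sum>i=k..<s. elog (Lf i + t)) = (\<Sum>i=k..<s. ereal (ln A))"
          by (rule sum.cong[OF refl], insert Apos, auto simp: Lf_def elog_def Ax_def)
        thus ?thesis by simp
      qed
      finally have "Phi s (M q) t = ereal G" unfolding G_def by simp
      moreover have "Phi s (M q) t \<le> f (M q)" by (rule major, rule Mpsd, insert q01, force)
      ultimately show ?thesis by simp
    qed
    have main: "\<And>q. card (Fr q) = m \<Longrightarrow> (\<forall>i. k \<le> i \<longrightarrow> i < n \<longrightarrow> 0 \<le> q i \<and> q i \<le> 1) \<Longrightarrow>
        (\<Sum>i=k..<n. q i) = real (s - k) \<Longrightarrow> ereal G \<le> f (M q)" for m
    proof (induction m rule: less_induct)
      case (less m q)
      show ?case
      proof (cases "Fr q = {}")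
        case True
        show ?thesis
        proof (rule base)
          fix i assume "k \<le> i" "i < n"
          thus "q i = 0 \<or> q i = 1" using True less.prems(2) unfolding Fr_def by force
        qed (use less.prems in auto)
      next
        case False
        then obtain i where iF: "i \<in> Fr q" by blast
        have "\<exists>j\<in>Fr q. j \<noteq> i"
        proof (rule ccontr)
          assume "\<not> (\<exists>j\<in>Fr q. j \<noteq> i)"
          hence o01: "\<And>j. j \<in> {k..<n} - {i} \<Longrightarrow> q j = 0 \<or> q j = 1"
            using less.prems(2) unfolding Fr_def by force
          have ik: "i \<in> {k..<n}" using iF Fr_def by simp
          have "(\<Sum>j=k..<n. q j) = q i + (\<Sum>j\<in>{k..<n} - {i}. q j)"
            using ik by (simp add: sum.remove)
          also have "(\<Sum>j\<in>{k..<n} - {i}. q j) = (\<Sum>j\<in>{k..<n} - {i}. if q j = 1 then 1 else 0)"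
            by (rule sum.cong[OF refl], insert o01, force)
          also have "\<dots> = real (card (({k..<n} - {i}) \<inter> {j. q j = 1}))"
            by (simp add: sum.If_cases)
          finally have "q i = real (s - k) - real (card (({k..<n} - {i}) \<inter> {j. q j = 1}))"
            using less.prems(3) by simp
          hence "q i = real_of_int (int (s - k) - int (card (({k..<n} - {i}) \<inter> {j. q j = 1})))" by simp
          moreover have "0 < q i" "q i < 1" using iF Fr_def by auto
          ultimately show False by (metis of_int_0_less_iff of_int_less_1_iff zless_imp_add1_zle
                add_0 not_le of_int_1_le_iff)
        qed
        then obtain j where jF: "j \<in> Fr q" and ji: "j \<noteq> i" by blast
        have qi: "0 < q i" "q i < 1" "k \<le> i" "i < n" and qj: "0 < q j" "q j < 1" "k \<le> j" "j < n"
          using iF jF Fr_def by auto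
        define d1 where "d1 = min (1 - q i) (q j)"
        define d2 where "d2 = min (q i) (1 - q j)"
        have d1p: "0 < d1" and d2p: "0 < d2" using qi qj d1_def d2_def by auto
        define q1 where "q1 l = q l + (if l = i then d1 else 0) - (if l = j then d1 else 0)" for l
        define q2 where "q2 l = q l - (if l = i then d2 else 0) + (if l = j then d2 else 0)" for l
        define th where "th = d2 / (d1 + d2)"
        have th01: "0 \<le> th" "th \<le> 1" using d1p d2p th_def by auto
        have comb: "th * q1 l + (1 - th) * q2 l = q l" for l
        proof -
          have "th * d1 - (1 - th) * d2 = 0" unfolding th_def using d1p d2p by (simp add: field_simps)
          thus ?thesis unfolding q1_def q2_def using ji by (auto simp: algebra_simps)
        qed
        have r1: "\<forall>l. k \<le> l \<longrightarrow> l < n \<longrightarrow> 0 \<le> q1 l \<and> q1 l \<le> 1"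
          using less.prems(2) qi qj ji unfolding q1_def d1_def by auto
        have r2: "\<forall>l. k \<le> l \<longrightarrow> l < n \<longrightarrow> 0 \<le> q2 l \<and> q2 l \<le> 1"
          using less.prems(2) qi qj ji unfolding q2_def d2_def by auto
        have ijs: "i \<in> {k..<n}" "j \<in> {k..<n}" using qi qj by auto
        have s1': "(\<Sum>l=k..<n. q1 l) = real (s - k)"
          unfolding q1_def using less.prems(3) ijs by (simp add: sum.distrib sum_subtractf)
        have s2': "(\<Sum>l=k..<n. q2 l) = real (s - k)"
          unfolding q2_def using less.prems(3) ijs by (simp add: sum.distrib sum_subtractf)
        have sub1: "Fr q1 \<subset> Fr q"
        proof
          show "Fr q1 \<subseteq> Fr q" using iF jF unfolding Fr_def q1_def by auto
          have "i \<notin> Fr q1 \<or> j \<notin> Fr q1" unfolding Fr_def q1_def d1_def using ji by auto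
          thus "Fr q1 \<noteq> Fr q" using iF jF by auto
        qed
        have sub2: "Fr q2 \<subset> Fr q"
        proof
          show "Fr q2 \<subseteq> Fr q" using iF jF unfolding Fr_def q2_def by auto
          have "i \<notin> Fr q2 \<or> j \<notin> Fr q2" unfolding Fr_def q2_def d2_def using ji by auto
          thus "Fr q2 \<noteq> Fr q" using iF jF by auto
        qed
        have c1: "card (Fr q1) < m" using psubset_card_mono[OF finFr sub1] less.prems(1) by simp
        have c2: "card (Fr q2) < m" using psubset_card_mono[OF finFr sub2] less.prems(1) by simp
        have G1: "ereal G \<le> f (M q1)" by (rule less.IH[OF c1 refl r1 s1'])
        have G2: "ereal G \<le> f (M q2)" by (rule less.IH[OF c2 refl r2 s2'])
        have Mc: "th \<cdot>\<^sub>m M q1 + (1 - th) \<cdot>\<^sub>m M q2 = M q"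
        proof -
          have "th \<cdot>\<^sub>m M q1 + (1 - th) \<cdot>\<^sub>m M q2 = U * dmat n (\<lambda>l. th * dq q1 l + (1 - th) * dq q2 l) * transpose_mat U"
            unfolding M_def by (rule udu_comb[OF Uc])
          also have "(\<lambda>l. th * dq q1 l + (1 - th) * dq q2 l) = dq q"
          proof
            fix l
            show "th * dq q1 l + (1 - th) * dq q2 l = dq q l"
            proof (cases "l < k")
              case True thus ?thesis by (simp add: dq_def algebra_simps)
            next
              case False
              have "th * (Ax * q1 l) + (1 - th) * (Ax * q2 l) = Ax * (th * q1 l + (1 - th) * q2 l)"
                by (simp add: algebra_simps)
              thus ?thesis using False comb[of l] by (simp add: dq_def)
            qed
          qed
          finally show ?thesis unfolding M_def .
        qed
        have "ereal (th * G + (1 - th) * G) \<le> f (th \<cdot>\<^sub>m M q1 + (1 - th) \<cdot>\<^sub>m M q2)"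
          using conc unfolding concave_on_psd_def
          using Mpsd[of q1] Mpsd[of q2] r1 r2 th01 G1 G2 by blast
        thus ?thesis unfolding Mc by (simp add: algebra_simps)
      qed
    qed
    define q0 where "q0 i = (if 0 < Ax then \<mu> i / Ax else (if i < s then 1 else 0))" for i
    have q0r: "\<forall>i. k \<le> i \<longrightarrow> i < n \<longrightarrow> 0 \<le> q0 i \<and> q0 i \<le> 1"
      using muAx mnn unfolding q0_def by auto
    have q0s: "(\<Sum>i=k..<n. q0 i) = real (s - k)"
    proof (cases "0 < Ax")
      case True
      hence "(\<Sum>i=k..<n. q0 i) = (\<Sum>i=k..<n. \<mu> i) / Ax" unfolding q0_def by (simp add: sum_divide_distrib)
      thus ?thesis using summu True by simp
    next
      case False
      hence "(\<Sum>i=k..<n. q0 i) = (\<Sum>i\<in>{k..<n} \<inter> {i. i < s}. 1)" unfolding q0_def by (simp add: sum.If_cases)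
      also have "{k..<n} \<inter> {i. i < s} = {k..<s}" using sn by auto
      finally show ?thesis by simp
    qed
    have Mq0: "M q0 = X"
    proof -
      have mu0: "\<mu> i = 0" if "\<not> 0 < Ax" "k \<le> i" "i < n" for i
        using muAx[OF that(2,3)] mnn[OF that(3)] that(1) Ax0 by simp
      have "dmat n (dq q0) = dmat n \<mu>"
        by (rule dmat_cong, insert mu0 Ax0, auto simp: dq_def q0_def)
      thus ?thesis unfolding M_def XU by simp
    qed
    have "ereal G \<le> f (M q0)" by (rule main[OF refl q0r q0s])
    thus ?thesis unfolding psiG Mq0 .
  qed
qed



theorem proposition2:
  fixes n s :: nat and C X :: "real mat" and t :: real
  assumes "1 \<le> n" and "1 \<le> s" and "s \<le> n"
    and "pd_mat n C"
    and "0 \<le> t" and "t \<le> lambda_min C"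
    and "psd_mat n X"
  shows "Phi_hat n s X t = psi s (map2 (\<lambda>a b. a + t * b) (eigvals X) (indic_vec n s))"
proof -
  have s1: "1 \<le> s" and sn: "s \<le> n" and t: "0 \<le> t" and X: "psd_mat n X" using assms by auto
  have symX: "sym_mat n X" using X psd_mat_def by auto
  obtain U \<mu> where U: "orthm n U" and XU: "X = U * dmat n \<mu> * transpose_mat U"
    and mono: "\<forall>i j. i \<le> j \<longrightarrow> j < n \<longrightarrow> \<mu> j \<le> \<mu> i" and ev: "eigvals X = map \<mu> [0..<n]"
    using spectral_sorted[OF symX] by blast
  have mdesc: "\<And>i j. i \<le> j \<Longrightarrow> j < n \<Longrightarrow> \<mu> j \<le> \<mu> i" using mono by blast
  have mnn: "\<And>i. i < n \<Longrightarrow> 0 \<le> \<mu> i" using psd_eig_nonneg[OF X U XU] .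
  define y where "y = map (\<lambda>i. \<mu> i + (if i < s then t else 0)) [0..<n]"
  have yeq: "map2 (\<lambda>a b. a + t * b) (eigvals X) (indic_vec n s) = y"
    unfolding ev indic_vec_def y_def by (auto intro!: nth_equalityI)
  let ?S = "{f X | f. concave_on_psd n f \<and> (\<forall>Y. psd_mat n Y \<longrightarrow> Phi s Y t \<le> f Y)}"
  have "Phi_hat n s X t \<le> Gam n s t U X"
    unfolding Phi_hat_def
  proof (rule Inf_lower)
    show "Gam n s t U X \<in> ?S"
      using Gam_concave[OF U] Gam_major[OF U sn t] by blast
  qed
  also have "\<dots> \<le> psi s y" by (rule Gam_attain[OF U XU mdesc mnn s1 sn t y_def])
  finally have le1: "Phi_hat n s X t \<le> psi s y" .
  have le2: "psi s y \<le> Phi_hat n s X t"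
    unfolding Phi_hat_def
  proof (rule Inf_greatest)
    fix z assume "z \<in> ?S"
    then obtain f where z: "z = f X" and conc: "concave_on_psd n f"
      and maj: "\<forall>Y. psd_mat n Y \<longrightarrow> Phi s Y t \<le> f Y" by blast
    show "psi s y \<le> z" unfolding z
      by (rule lower_bound[OF conc _ U XU mdesc mnn s1 sn t y_def], use maj in blast)
  qed
  show ?thesis unfolding yeq using le1 le2 by simp
qed

end
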